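(* Let $\varphi$ be a Musielak–Orlicz function. Then for every $r\in(0,1]$, $P_\varphi(\Omega)=H^{\varphi,\infty,M}_{\mathrm{at},r}(\Omega)$ and $Q_\varphi(\Omega)=H^{\varphi,\infty,S}_{\mathrm{at},r}(\Omega)$ with equivalent quasi-norms.
   Context: Let $(\Omega,\mathcal F,\mathbb P)$ be a probability space, $(\mathcal F_n)_{n\in\mathbb Z_+}$ a nondecreasing sequence of sub-$\sigma$-algebras, $\mathbb E_n$ the conditional expectations. A Musielak–Orlicz function is $\varphi:\Omega\times[0,\infty)\to[0,\infty)$ with $\varphi(x,\cdot)$ nondecreasing, $\varphi(x,0)=0$, $\lim_{t\to\infty}\varphi(x,t)=\infty$ for each $x$, $\varphi(\cdot,t)$ measurable for each $t$; $\|f\|_{L^\varphi(\Omega)}:=\inf\{\lambda>0:\int_\Omega\varphi(x,|f|/\lambda)\,d\mathbb P\le1\}$. $\mathcal M$ is the set of martingales $f=(f_n)_{n\in\mathbb Z_+}$ with $f_0=0$; $d_nf:=f_n-f_{n-1}$, $S_n(f):=(\sum_{i=1}^n|d_if|^2)^{1/2}$, $S(f):=(\sum_{i\ge1}|d_if|^2)^{1/2}$, and for a function or martingale $M(a):=\sup_n|\mathbb E_na|$ (resp. $\sup_n|f_n|$). $\Lambda$ is the set of nondecreasing nonnegative adapted sequences $(\lambda_n)_{n\in\mathbb Z_+}$, $\lambda_\infty:=\lim_n\lambda_n$. $\|f\|_{P_\varphi}:=\inf\|\lambda_\infty\|_{L^\varphi}$ over $(\lambda_n)\in\Lambda$ with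 $|f_n|\le\lambda_{n-1}$ for all $n\ge1$; $\|f\|_{Q_\varphi}:=\inf\|\lambda_\infty\|_{L^\varphi}$ over $(\lambda_n)\in\Lambda$ with $S_n(f)\le\lambda_{n-1}$ for all $n\ge1$; $P_\varphi(\Omega)$, $Q_\varphi(\Omega)$ are the sets of $f\in\mathcal M$ with finite quasi-norm. For a stopping time $\nu$, $B_\nu:=\{\nu<\infty\}$. For $T\in\{S,M\}$, a measurable $a$ is a $(\varphi,\infty)_T$-atom if there is a stopping time $\nu$ with (i) $\mathbb E_na=0$ whenever $\nu\ge n$, (ii) $\|T(a)\|_{L^\infty(B_\nu)}\le\|\mathbf 1_{B_\nu}\|_{L^\varphi(\Omega)}^{-1}$ (where $S(a)$, $M(a)$ are computed for the martingale $(\mathbb E_na)_n$). For $r>0$, $H^{\varphi,\infty,T}_{\mathrm{at},r}(\Omega)$ is the set of $f\in\mathcal M$ for which there exist $\mu^k\ge0$ and $(\varphi,\infty)_T$-atoms $a^k$ with stopping times $\nu^k$ ($k\in\mathbb Z$) such that $f_n=\sum_k\mu^k\mathbb E_na^k$ for all $n$ and $\|\{\sum_k[\mu^k\mathbf 1_{B_{\nu^k}}/\|\mathbf 1_{B_{\nu^k}}\|_{L^\varphi}]^r\}^{1/r}\|_{L^\varphi(\Omega)}<\infty$; its quasi-norm is the infimum of this quantity over all such decompositions. *)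

theory Defs
  imports "HOL-Probability.Probability"
begin

definition is_filtration :: "'a measure \<Rightarrow> (nat \<Rightarrow> 'a measure) \<Rightarrow> bool" where
  "is_filtration M F \<longleftrightarrow> (\<forall>n. subalgebra M (F n)) \<and> (\<forall>n. sets (F n) \<subseteq> sets (F (Suc n)))"

definition condE :: "'a measure \<Rightarrow> (nat \<Rightarrow> 'a measure) \<Rightarrow> nat \<Rightarrow> ('a \<Rightarrow> real) \<Rightarrow> 'a \<Rightarrow> real" where
  "condE M F n a = real_cond_exp M (F n) a"

definition martingales :: "'a measure \<Rightarrow> (nat \<Rightarrow> 'a measure) \<Rightarrow> (nat \<Rightarrow> 'a \<Rightarrow> real) set" where
  "martingales M F = {f. (AE x in M. f 0 x = 0) \<and>
      (\<forall>n. f n \<in> borel_measurable (F n) \<and> integrable M (f n)) \<and>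
      (\<forall>n. AE x in M. condE M F n (f (Suc n)) x = f n x)}"

definition is_stopping_time :: "'a measure \<Rightarrow> (nat \<Rightarrow> 'a measure) \<Rightarrow> ('a \<Rightarrow> enat) \<Rightarrow> bool" where
  "is_stopping_time M F \<nu> \<longleftrightarrow> (\<forall>n::nat. {x \<in> space M. \<nu> x \<le> enat n} \<in> sets (F n))"

definition B_set :: "'a measure \<Rightarrow> ('a \<Rightarrow> enat) \<Rightarrow> 'a set" where
  "B_set M \<nu> = {x \<in> space M. \<nu> x < \<infinity>}"

definition musielak_orlicz :: "'a measure \<Rightarrow> ('a \<Rightarrow> real \<Rightarrow> real) \<Rightarrow> bool" where
  "musielak_orlicz M \<phi> \<longleftrightarrow>
     (\<forall>x\<in>space M. mono_on {0..} (\<phi> x) \<and> \<phi> x 0 = 0 \<and> (\<forall>t\<ge>0. \<phi> x t \<ge> 0)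
        \<and> filterlim (\<phi> x) at_top at_top)
   \<and> (\<forall>t\<ge>0. (\<lambda>x. \<phi> x t) \<in> borel_measurable M)"

definition phi_ext :: "('a \<Rightarrow> real \<Rightarrow> real) \<Rightarrow> 'a \<Rightarrow> ennreal \<Rightarrow> ennreal" where
  "phi_ext \<phi> x t = (if t = \<infinity> then \<infinity> else ennreal (\<phi> x (enn2real t)))"

text \<open>Luxemburg quasi-norm of a nonnegative (possibly infinite) function; Inf {} = infinity.\<close>
definition mo_norm :: "'a measure \<Rightarrow> ('a \<Rightarrow> real \<Rightarrow> real) \<Rightarrow> ('a \<Rightarrow> ennreal) \<Rightarrow> ennreal" where
  "mo_norm M \<phi> g = Inf {ennreal l | l. l > 0 \<and> (\<integral>\<^sup>+ x. phi_ext \<phi> x (g x / ennreal l) \<partial>M) \<le> 1}"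

definition epow :: "ennreal \<Rightarrow> real \<Rightarrow> ennreal" where
  "epow t p = (if t = \<infinity> then \<infinity> else ennreal (enn2real t powr p))"

definition sqfun_n :: "(nat \<Rightarrow> 'a \<Rightarrow> real) \<Rightarrow> nat \<Rightarrow> 'a \<Rightarrow> real" where
  "sqfun_n f n x = sqrt (\<Sum>i\<in>{1..n}. (f i x - f (i - 1) x)\<^sup>2)"

definition S_atom :: "'a measure \<Rightarrow> (nat \<Rightarrow> 'a measure) \<Rightarrow> ('a \<Rightarrow> real) \<Rightarrow> 'a \<Rightarrow> ennreal" where
  "S_atom M F a x = epow (\<Sum>i. ennreal ((condE M F (Suc i) a x - condE M F i a x)\<^sup>2)) (1/2)"

definition M_atom :: "'a measure \<Rightarrow> (nat \<Rightarrow> 'a measure) \<Rightarrow> ('a \<Rightarrow> real) \<Rightarrow> 'a \<Rightarrow> ennreal" where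
  "M_atom M F a x = (SUP n. ennreal \<bar>condE M F n a x\<bar>)"

definition Lambda :: "'a measure \<Rightarrow> (nat \<Rightarrow> 'a measure) \<Rightarrow> (nat \<Rightarrow> 'a \<Rightarrow> real) set" where
  "Lambda M F = {lam. \<forall>n. lam n \<in> borel_measurable (F n) \<and>
       (\<forall>x\<in>space M. 0 \<le> lam n x \<and> lam n x \<le> lam (Suc n) x)}"

definition lam_inf :: "(nat \<Rightarrow> 'a \<Rightarrow> real) \<Rightarrow> 'a \<Rightarrow> ennreal" where
  "lam_inf lam x = (SUP n. ennreal (lam n x))"

definition P_norm :: "'a measure \<Rightarrow> (nat \<Rightarrow> 'a measure) \<Rightarrow> ('a \<Rightarrow> real \<Rightarrow> real) \<Rightarrow> (nat \<Rightarrow> 'a \<Rightarrow> real) \<Rightarrow> ennreal" where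
  "P_norm M F \<phi> f = Inf {mo_norm M \<phi> (lam_inf lam) | lam. lam \<in> Lambda M F \<and>
       (\<forall>n\<ge>1. AE x in M. \<bar>f n x\<bar> \<le> lam (n - 1) x)}"

definition Q_norm :: "'a measure \<Rightarrow> (nat \<Rightarrow> 'a measure) \<Rightarrow> ('a \<Rightarrow> real \<Rightarrow> real) \<Rightarrow> (nat \<Rightarrow> 'a \<Rightarrow> real) \<Rightarrow> ennreal" where
  "Q_norm M F \<phi> f = Inf {mo_norm M \<phi> (lam_inf lam) | lam. lam \<in> Lambda M F \<and>
       (\<forall>n\<ge>1. AE x in M. sqfun_n f n x \<le> lam (n - 1) x)}"

definition P_space :: "'a measure \<Rightarrow> (nat \<Rightarrow> 'a measure) \<Rightarrow> ('a \<Rightarrow> real \<Rightarrow> real) \<Rightarrow> (nat \<Rightarrow> 'a \<Rightarrow> real) set" where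
  "P_space M F \<phi> = {f \<in> martingales M F. P_norm M F \<phi> f < \<infinity>}"

definition Q_space :: "'a measure \<Rightarrow> (nat \<Rightarrow> 'a measure) \<Rightarrow> ('a \<Rightarrow> real \<Rightarrow> real) \<Rightarrow> (nat \<Rightarrow> 'a \<Rightarrow> real) set" where
  "Q_space M F \<phi> = {f \<in> martingales M F. Q_norm M F \<phi> f < \<infinity>}"

text \<open>(phi,infinity)_T-atom with stopping time nu; T is S_atom or M_atom.
  Measurable a is taken integrable so that E_n a makes sense.\<close>
definition is_atom :: "'a measure \<Rightarrow> (nat \<Rightarrow> 'a measure) \<Rightarrow> ('a \<Rightarrow> real \<Rightarrow> real)
    \<Rightarrow> (('a \<Rightarrow> real) \<Rightarrow> 'a \<Rightarrow> ennreal) \<Rightarrow> ('a \<Rightarrow> real) \<Rightarrow> ('a \<Rightarrow> enat) \<Rightarrow> bool" where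
  "is_atom M F \<phi> T a \<nu> \<longleftrightarrow> integrable M a \<and> is_stopping_time M F \<nu> \<and>
     (\<forall>n::nat. AE x in M. enat n \<le> \<nu> x \<longrightarrow> condE M F n a x = 0) \<and>
     (AE x in M. x \<in> B_set M \<nu> \<longrightarrow>
        T a x \<le> inverse (mo_norm M \<phi> (indicator (B_set M \<nu>))))"

definition atomic_decomp :: "'a measure \<Rightarrow> (nat \<Rightarrow> 'a measure) \<Rightarrow> ('a \<Rightarrow> real \<Rightarrow> real)
    \<Rightarrow> (('a \<Rightarrow> real) \<Rightarrow> 'a \<Rightarrow> ennreal) \<Rightarrow> (nat \<Rightarrow> 'a \<Rightarrow> real)
    \<Rightarrow> (int \<Rightarrow> real) \<Rightarrow> (int \<Rightarrow> 'a \<Rightarrow> real) \<Rightarrow> (int \<Rightarrow> 'a \<Rightarrow> enat) \<Rightarrow> bool" where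
  "atomic_decomp M F \<phi> T f \<mu> a \<nu> \<longleftrightarrow>
     (\<forall>k. 0 \<le> \<mu> k \<and> is_atom M F \<phi> T (a k) (\<nu> k)) \<and>
     (\<forall>n. AE x in M. ((\<lambda>k. \<mu> k * condE M F n (a k) x) has_sum f n x) UNIV)"

definition atomic_size :: "'a measure \<Rightarrow> ('a \<Rightarrow> real \<Rightarrow> real) \<Rightarrow> real
    \<Rightarrow> (int \<Rightarrow> real) \<Rightarrow> (int \<Rightarrow> 'a \<Rightarrow> enat) \<Rightarrow> ennreal" where
  "atomic_size M \<phi> r \<mu> \<nu> = mo_norm M \<phi> (\<lambda>x. epow (\<Sum>\<^sub>\<infinity>k. epow
       (ennreal (\<mu> k) * indicator (B_set M (\<nu> k)) x * inverse (mo_norm M \<phi> (indicator (B_set M (\<nu> k))))) r) (1 / r))"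

definition Hat_norm :: "'a measure \<Rightarrow> (nat \<Rightarrow> 'a measure) \<Rightarrow> ('a \<Rightarrow> real \<Rightarrow> real)
    \<Rightarrow> (('a \<Rightarrow> real) \<Rightarrow> 'a \<Rightarrow> ennreal) \<Rightarrow> real \<Rightarrow> (nat \<Rightarrow> 'a \<Rightarrow> real) \<Rightarrow> ennreal" where
  "Hat_norm M F \<phi> T r f = Inf {atomic_size M \<phi> r \<mu> \<nu> | \<mu> a \<nu>. atomic_decomp M F \<phi> T f \<mu> a \<nu>}"

definition Hat_space :: "'a measure \<Rightarrow> (nat \<Rightarrow> 'a measure) \<Rightarrow> ('a \<Rightarrow> real \<Rightarrow> real)
    \<Rightarrow> (('a \<Rightarrow> real) \<Rightarrow> 'a \<Rightarrow> ennreal) \<Rightarrow> real \<Rightarrow> (nat \<Rightarrow> 'a \<Rightarrow> real) set" where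
  "Hat_space M F \<phi> T r = {f \<in> martingales M F. Hat_norm M F \<phi> T r f < \<infinity>}"

end

theory Submission
  imports Defs
begin

lemma phi_ext_mono:
  assumes "musielak_orlicz M \<phi>" "x \<in> space M" "t \<le> s"
  shows "phi_ext \<phi> x t \<le> phi_ext \<phi> x s"
proof (cases "s = \<infinity>")
  case True then show ?thesis by (simp add: phi_ext_def)
next
  case False
  then have "t \<noteq> \<infinity>" using assms(3) by (auto simp: top_unique)
  then have "enn2real t \<le> enn2real s" using assms(3) False by (intro enn2real_mono) (auto simp: top.not_eq_extremum)
  moreover have "mono_on {0..} (\<phi> x)" using assms unfolding musielak_orlicz_def by auto
  ultimately have "\<phi> x (enn2real t) \<le> \<phi> x (enn2real s)"
    by (auto intro: mono_onD)
  then show ?thesis using False \<open>t \<noteq> \<infinity>\<close> by (simp add: phi_ext_def ennreal_leI)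
qed

lemma mo_norm_mono_AE:
  assumes "musielak_orlicz M \<phi>" "AE x in M. g x \<le> h x"
  shows "mo_norm M \<phi> g \<le> mo_norm M \<phi> h"
  unfolding mo_norm_def
proof (rule Inf_superset_mono, safe)
  fix l :: real assume l: "l > 0" "(\<integral>\<^sup>+ x. phi_ext \<phi> x (h x / ennreal l) \<partial>M) \<le> 1"
  have "(\<integral>\<^sup>+ x. phi_ext \<phi> x (g x / ennreal l) \<partial>M) \<le> (\<integral>\<^sup>+ x. phi_ext \<phi> x (h x / ennreal l) \<partial>M)"
    using assms(2) AE_space
    by (intro nn_integral_mono_AE, eventually_elim) (auto intro!: phi_ext_mono[OF assms(1)] divide_right_mono_ennreal)
  with l show "\<exists>la. ennreal l = ennreal la \<and> 0 < la \<and> (\<integral>\<^sup>+ x. phi_ext \<phi> x (g x / ennreal la) \<partial>M) \<le> 1"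
    by auto
qed

lemma ennreal_mult_Inf_image:
  fixes c :: real assumes "c > 0"
  shows "Inf ((\<lambda>y. ennreal c * y) ` S) = ennreal c * Inf S"
proof (rule antisym)
  have "ennreal (1/c) * Inf ((\<lambda>y. ennreal c * y) ` S) \<le> Inf S"
  proof (rule Inf_greatest)
    fix s assume "s \<in> S"
    then have "Inf ((\<lambda>y. ennreal c * y) ` S) \<le> ennreal c * s" by (auto intro: Inf_lower)
    then have "ennreal (1/c) * Inf ((\<lambda>y. ennreal c * y) ` S) \<le> ennreal (1/c) * (ennreal c * s)"
      by (rule mult_left_mono) simp
    also have "\<dots> = s" using assms by (simp flip: mult.assoc ennreal_mult)
    finally show "ennreal (1/c) * Inf ((\<lambda>y. ennreal c * y) ` S) \<le> s" .
  qed
  then have "ennreal c * (ennreal (1/c) * Inf ((\<lambda>y. ennreal c * y) ` S)) \<le> ennreal c * Inf S"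
    by (rule mult_left_mono) simp
  then show "Inf ((\<lambda>y. ennreal c * y) ` S) \<le> ennreal c * Inf S"
    using assms by (simp flip: mult.assoc ennreal_mult)
next
  show "ennreal c * Inf S \<le> Inf ((\<lambda>y. ennreal c * y) ` S)"
    by (rule Inf_greatest) (auto intro: mult_left_mono Inf_lower)
qed

lemma mo_norm_scale:
  assumes "c > 0"
  shows "mo_norm M \<phi> (\<lambda>x. ennreal c * g x) = ennreal c * mo_norm M \<phi> g"
proof -
  have eq: "(ennreal c * t) / ennreal (c * l) = t / ennreal l" if "l > 0" for t l
  proof -
    have "(ennreal c * t) / ennreal (c * l) = ennreal c * t * (inverse (ennreal c) * inverse (ennreal l))"
      using assms that by (simp add: divide_ennreal_def ennreal_mult ennreal_inverse_mult)
    also have "\<dots> = (ennreal c * inverse (ennreal c)) * (t * inverse (ennreal l))"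
      by (simp add: ac_simps)
    also have "ennreal c * inverse (ennreal c) = 1" using assms by (simp add: ennreal_inverse_positive ennreal_mult[symmetric] inverse_ennreal)
    finally show ?thesis by (simp add: divide_ennreal_def)
  qed
  have "{ennreal l | l. l > 0 \<and> (\<integral>\<^sup>+ x. phi_ext \<phi> x (ennreal c * g x / ennreal l) \<partial>M) \<le> 1}
     = (\<lambda>y. ennreal c * y) ` {ennreal l | l. l > 0 \<and> (\<integral>\<^sup>+ x. phi_ext \<phi> x (g x / ennreal l) \<partial>M) \<le> 1}"
  proof (safe)
    fix l :: real assume l: "l > 0" "(\<integral>\<^sup>+ x. phi_ext \<phi> x (ennreal c * g x / ennreal l) \<partial>M) \<le> 1"
    have "l / c > 0" using l assms by simp
    moreover have "ennreal c * g x / ennreal l = g x / ennreal (l / c)" for x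
      using eq[of "l/c" "g x"] \<open>l / c > 0\<close> assms by simp
    ultimately show "ennreal l \<in> (\<lambda>y. ennreal c * y) ` {ennreal l | l. l > 0 \<and> (\<integral>\<^sup>+ x. phi_ext \<phi> x (g x / ennreal l) \<partial>M) \<le> 1}"
      using l assms by (intro image_eqI[of _ _ "ennreal (l/c)"]) (auto simp: ennreal_mult[symmetric])
  next
    fix l :: real assume l: "l > 0" "(\<integral>\<^sup>+ x. phi_ext \<phi> x (g x / ennreal l) \<partial>M) \<le> 1"
    then show "\<exists>la. ennreal c * ennreal l = ennreal la \<and> 0 < la \<and> (\<integral>\<^sup>+ x. phi_ext \<phi> x (ennreal c * g x / ennreal la) \<partial>M) \<le> 1"
      using assms eq by (intro exI[of _ "c * l"]) (auto simp: ennreal_mult)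
  qed
  then show ?thesis unfolding mo_norm_def
    using assms by (simp add: ennreal_mult_Inf_image)
qed


lemma filt_subalg: "is_filtration M F \<Longrightarrow> subalgebra M (F n)"
  unfolding is_filtration_def by auto

lemma filt_sets_mono: assumes "is_filtration M F" "n \<le> m" shows "sets (F n) \<subseteq> sets (F m)"
  using assms(2)
proof (induction m rule: dec_induct)
  case (step m) then show ?case using assms(1) unfolding is_filtration_def by blast
qed simp

lemma filt_nested: assumes "is_filtration M F" "n \<le> m" shows "subalgebra (F m) (F n)"
  using filt_sets_mono[OF assms] filt_subalg[OF assms(1), of n] filt_subalg[OF assms(1), of m]
  unfolding subalgebra_def by auto

lemma filt_meas_mono: assumes "is_filtration M F" "n \<le> m" "f \<in> borel_measurable (F n)"
  shows "f \<in> borel_measurable (F m)"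
  using measurable_from_subalg[OF filt_nested[OF assms(1,2)] assms(3)] .

lemma filt_meas_M: assumes "is_filtration M F" "f \<in> borel_measurable (F n)"
  shows "f \<in> borel_measurable M"
  using measurable_from_subalg[OF filt_subalg[OF assms(1)] assms(2)] .

lemma filt_sets_M: assumes "is_filtration M F" "A \<in> sets (F n)" shows "A \<in> sets M"
  using assms filt_subalg[OF assms(1), of n] unfolding subalgebra_def by auto

lemma filt_space: assumes "is_filtration M F" shows "space (F n) = space M"
  using filt_subalg[OF assms] unfolding subalgebra_def by auto

lemma sfs: assumes "prob_space M" "is_filtration M F" shows "sigma_finite_subalgebra M (F n)"
proof -
  interpret prob_space M by fact
  have "finite_measure_subalgebra M (F n)"
    by unfold_locales (rule filt_subalg[OF assms(2)])
  then show ?thesis by (rule finite_measure_subalgebra_is_sigma_finite)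
qed

lemma condE_tower:
  assumes "prob_space M" "is_filtration M F" "integrable M h" "n \<le> m"
  shows "AE x in M. condE M F n (condE M F m h) x = condE M F n h x"
proof -
  interpret sigma_finite_subalgebra M "F n" by (rule sfs[OF assms(1,2)])
  show ?thesis unfolding condE_def
    by (rule real_cond_exp_nested_subalg[OF filt_subalg[OF assms(2)] filt_nested[OF assms(2,4)] assms(3)])
qed

lemma condE_meas[measurable]:
  assumes "prob_space M" "is_filtration M F"
  shows "condE M F n h \<in> borel_measurable (F n)" "condE M F n h \<in> borel_measurable M"
proof -
  interpret sigma_finite_subalgebra M "F n" by (rule sfs[OF assms(1,2)])
  show "condE M F n h \<in> borel_measurable (F n)" "condE M F n h \<in> borel_measurable M"
    unfolding condE_def by auto
qed

lemma condE_int: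
  assumes "prob_space M" "is_filtration M F" "integrable M h"
  shows "integrable M (condE M F n h)" "(\<integral>x. condE M F n h x \<partial>M) = (\<integral>x. h x \<partial>M)"
proof -
  interpret sigma_finite_subalgebra M "F n" by (rule sfs[OF assms(1,2)])
  show "integrable M (condE M F n h)" "(\<integral>x. condE M F n h x \<partial>M) = (\<integral>x. h x \<partial>M)"
    unfolding condE_def using assms(3) by auto
qed

lemma condE_cong:
  assumes "prob_space M" "is_filtration M F" "AE x in M. f x = g x" "f \<in> borel_measurable M" "g \<in> borel_measurable M"
  shows "AE x in M. condE M F n f x = condE M F n g x"
proof -
  interpret sigma_finite_subalgebra M "F n" by (rule sfs[OF assms(1,2)])
  show ?thesis unfolding condE_def by (rule real_cond_exp_cong[OF assms(3-5)])
qed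

lemma condE_self:
  assumes "prob_space M" "is_filtration M F" "integrable M f" "f \<in> borel_measurable (F n)"
  shows "AE x in M. condE M F n f x = f x"
proof -
  interpret sigma_finite_subalgebra M "F n" by (rule sfs[OF assms(1,2)])
  show ?thesis unfolding condE_def by (rule real_cond_exp_F_meas[OF assms(3,4)])
qed

lemma condE_diff:
  assumes "prob_space M" "is_filtration M F" "integrable M f" "integrable M g"
  shows "AE x in M. condE M F n (\<lambda>x. f x - g x) x = condE M F n f x - condE M F n g x"
proof -
  interpret sigma_finite_subalgebra M "F n" by (rule sfs[OF assms(1,2)])
  show ?thesis unfolding condE_def by (rule real_cond_exp_diff[OF assms(3,4)])
qed

lemma condE_add:
  assumes "prob_space M" "is_filtration M F" "integrable M f" "integrable M g"
  shows "AE x in M. condE M F n (\<lambda>x. f x + g x) x = condE M F n f x + condE M F n g x"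
proof -
  interpret sigma_finite_subalgebra M "F n" by (rule sfs[OF assms(1,2)])
  show ?thesis unfolding condE_def by (rule real_cond_exp_add[OF assms(3,4)])
qed

lemma condE_cdiv:
  assumes "prob_space M" "is_filtration M F" "integrable M f"
  shows "AE x in M. condE M F n (\<lambda>x. f x / c) x = condE M F n f x / c"
proof -
  interpret sigma_finite_subalgebra M "F n" by (rule sfs[OF assms(1,2)])
  show ?thesis unfolding condE_def by (rule real_cond_exp_cdiv[OF assms(3)])
qed

lemma condE_mult:
  assumes "prob_space M" "is_filtration M F" "f \<in> borel_measurable (F n)" "g \<in> borel_measurable M"
    "integrable M (\<lambda>x. f x * g x)"
  shows "AE x in M. condE M F n (\<lambda>x. f x * g x) x = f x * condE M F n g x"
proof -
  interpret sigma_finite_subalgebra M "F n" by (rule sfs[OF assms(1,2)])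
  show ?thesis unfolding condE_def by (rule real_cond_exp_mult[OF assms(3-5)])
qed

lemma condE_intg:
  assumes "prob_space M" "is_filtration M F" "integrable M (\<lambda>x. f x * g x)"
    "f \<in> borel_measurable (F n)" "g \<in> borel_measurable M"
  shows "(\<integral> x. f x * condE M F n g x \<partial>M) = (\<integral> x. f x * g x \<partial>M)"
proof -
  interpret sigma_finite_subalgebra M "F n" by (rule sfs[OF assms(1,2)])
  show ?thesis unfolding condE_def by (rule real_cond_exp_intg(2)[OF assms(3-5)])
qed

lemma condE_abs_int:
  assumes "prob_space M" "is_filtration M F" "integrable M f"
  shows "(\<integral>\<^sup>+ x. ennreal \<bar>condE M F n f x\<bar> \<partial>M) \<le> (\<integral>\<^sup>+ x. ennreal \<bar>f x\<bar> \<partial>M)"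
proof -
  interpret sigma_finite_subalgebra M "F n" by (rule sfs[OF assms(1,2)])
  have i: "integrable M (\<lambda>x. \<bar>f x\<bar>)" using assms(3) by auto
  have m1: "AE x in M. real_cond_exp M (F n) f x \<le> real_cond_exp M (F n) (\<lambda>x. \<bar>f x\<bar>) x"
    by (rule real_cond_exp_mono) (use assms(3) i in auto)
  have "AE x in M. real_cond_exp M (F n) (\<lambda>x. - \<bar>f x\<bar>) x \<le> real_cond_exp M (F n) f x"
    by (rule real_cond_exp_mono) (use assms(3) i in auto)
  moreover have "AE x in M. real_cond_exp M (F n) (\<lambda>x. - \<bar>f x\<bar>) x = - real_cond_exp M (F n) (\<lambda>x. \<bar>f x\<bar>) x"
    using real_cond_exp_cmult[OF i, of "-1"] by simp
  ultimately have ae: "AE x in M. \<bar>condE M F n f x\<bar> \<le> condE M F n (\<lambda>x. \<bar>f x\<bar>) x"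
    using m1 unfolding condE_def by eventually_elim auto
  have "(\<integral>\<^sup>+ x. ennreal \<bar>condE M F n f x\<bar> \<partial>M) \<le> (\<integral>\<^sup>+ x. ennreal (condE M F n (\<lambda>x. \<bar>f x\<bar>) x) \<partial>M)"
    by (rule nn_integral_mono_AE) (use ae in \<open>auto elim: eventually_mono\<close>)
  also have "\<dots> = ennreal (\<integral> x. condE M F n (\<lambda>x. \<bar>f x\<bar>) x \<partial>M)"
    using ae by (intro nn_integral_eq_integral condE_int[OF assms(1,2) i]) (auto elim: eventually_mono)
  also have "\<dots> = ennreal (\<integral> x. \<bar>f x\<bar> \<partial>M)" using condE_int[OF assms(1,2) i] by simp
  also have "\<dots> = (\<integral>\<^sup>+ x. ennreal \<bar>f x\<bar> \<partial>M)"
    by (rule nn_integral_eq_integral[symmetric]) (use i in auto)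
  finally show ?thesis .
qed

lemma mart_tower:
  assumes "prob_space M" "is_filtration M F"
    and meas: "\<And>n. g n \<in> borel_measurable (F n)" and int: "\<And>n. integrable M (g n)"
    and step: "\<And>n. AE x in M. condE M F n (g (Suc n)) x = g n x"
    and "n \<le> m"
  shows "AE x in M. condE M F n (g m) x = g n x"
  using assms(6)
proof (induction m rule: dec_induct)
  case base
  show ?case by (rule condE_self[OF assms(1,2) int meas])
next
  case (step m)
  have gm: "g k \<in> borel_measurable M" for k using filt_meas_M[OF assms(2) meas] .
  have "AE x in M. condE M F n (condE M F m (g (Suc m))) x = condE M F n (g (Suc m)) x"
    by (rule condE_tower[OF assms(1,2) int]) (use step in auto)
  moreover have "AE x in M. condE M F n (condE M F m (g (Suc m))) x = condE M F n (g m) x"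
    by (rule condE_cong[OF assms(1,2) assms(5) condE_meas(2)[OF assms(1,2)] gm])
  ultimately show ?case using step.IH by eventually_elim auto
qed


lemma abs_le_amgm: fixes y c :: real assumes "c > 0" shows "\<bar>y\<bar> \<le> (c + y\<^sup>2 / c) / 2"
proof -
  have "0 \<le> (\<bar>y\<bar> - c)\<^sup>2" by simp
  then have "2 * c * \<bar>y\<bar> \<le> c\<^sup>2 + y\<^sup>2" by (simp add: power2_eq_square algebra_simps)
  then show ?thesis using assms by (simp add: field_simps power2_eq_square)
qed

lemma closure_L2:
  assumes P: "prob_space M" and Fi: "is_filtration M F"
    and meas: "\<And>n. g n \<in> borel_measurable (F n)"
    and bnd: "\<And>n. \<exists>B. AE x in M. \<bar>g n x\<bar> \<le> B"
    and step: "\<And>n. AE x in M. condE M F n (g (Suc n)) x = g n x"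
    and L2: "\<And>n. (\<integral>x. (g n x)\<^sup>2 \<partial>M) \<le> K"
  shows "\<exists>G. integrable M G \<and> (\<forall>n. AE x in M. condE M F n G x = g n x)"
proof -
  interpret prob_space M by fact
  have gM[measurable]: "g n \<in> borel_measurable M" for n using filt_meas_M[OF Fi meas] .
  have cM[measurable]: "condE M F n h \<in> borel_measurable M" for n h using condE_meas(2)[OF P Fi] .
  obtain B where B: "\<And>n. AE x in M. \<bar>g n x\<bar> \<le> B n" using bnd by metis
  have int: "integrable M (g n)" for n
    using B[of n] by (intro integrable_const_bound[of _ "B n"]) auto
  have int2: "integrable M (\<lambda>x. g n x * g m x)" for n m
  proof (rule integrable_const_bound[of _ "B n * B m"])
    show "AE x in M. norm (g n x * g m x) \<le> B n * B m"
      using B[of n] B[of m] by eventually_elim (auto simp: abs_mult intro: mult_mono)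
  qed auto
  have int2': "integrable M (\<lambda>x. (g n x)\<^sup>2)" for n using int2[of n n] by (simp add: power2_eq_square)
  have tower: "n \<le> m \<Longrightarrow> AE x in M. condE M F n (g m) x = g n x" for n m
    by (rule mart_tower[OF P Fi meas int step])
  have orth: "(\<integral>x. g n x * g m x \<partial>M) = (\<integral>x. (g n x)\<^sup>2 \<partial>M)" if "n \<le> m" for n m
  proof -
    have "(\<integral>x. g n x * g m x \<partial>M) = (\<integral>x. g n x * condE M F n (g m) x \<partial>M)"
      by (rule condE_intg[OF P Fi int2 meas gM, symmetric])
    also have "\<dots> = (\<integral>x. (g n x)\<^sup>2 \<partial>M)"
      by (rule integral_cong_AE) (use tower[OF that] in \<open>auto simp: power2_eq_square elim: eventually_mono\<close>)
    finally show ?thesis .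
  qed
  define V where "V n = (\<integral>x. (g n x)\<^sup>2 \<partial>M)" for n
  have diffsq: "(\<integral>x. (g m x - g n x)\<^sup>2 \<partial>M) = V m - V n" if "n \<le> m" for n m
  proof -
    have "(\<integral>x. (g m x - g n x)\<^sup>2 \<partial>M) = (\<integral>x. (g m x)\<^sup>2 - 2 * (g n x * g m x) + (g n x)\<^sup>2 \<partial>M)"
      by (rule arg_cong[where f="integral\<^sup>L M"]) (auto simp: fun_eq_iff power2_eq_square algebra_simps)
    also have "\<dots> = V m - 2 * (\<integral>x. g n x * g m x \<partial>M) + V n"
      unfolding V_def using int2 int2' by (simp add: integral_add integral_diff)
    also have "\<dots> = V m - V n" using orth[OF that] by (simp add: V_def)
    finally show ?thesis .
  qed
  have Vmono: "incseq V"
  proof (rule incseq_SucI)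
    fix n
    have "0 \<le> (\<integral>x. (g (Suc n) x - g n x)\<^sup>2 \<partial>M)" by simp
    then show "V n \<le> V (Suc n)" using diffsq[of n "Suc n"] by simp
  qed
  have VK: "\<forall>i. V i \<le> K" using L2 V_def by simp
  obtain L where L: "V \<longlonglongrightarrow> L" using incseq_convergent[OF Vmono VK] by blast
  have VL: "V n \<le> L" for n using incseq_le[OF Vmono L] .
  have "\<exists>N. \<forall>n\<ge>N. L - V n < e" if "e > 0" for e
  proof -
    from L that obtain N where "\<forall>n\<ge>N. dist (V n) L < e" by (auto simp: lim_sequentially)
    then show ?thesis by (auto simp: dist_real_def abs_less_iff)
  qed
  then have "\<forall>j. \<exists>N. \<forall>n\<ge>N. L - V n < (1/4::real)^j" by simp
  then obtain N where N: "\<And>j n. n \<ge> N j \<Longrightarrow> L - V n < (1/4)^j"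
    by metis
  define \<sigma> where "\<sigma> j = (\<Sum>i\<le>j. N i) + j" for j
  have \<sigma>N: "N j \<le> \<sigma> j" for j unfolding \<sigma>_def by (metis atMost_iff finite_atMost le_add1 member_le_sum order_refl trans_le_add1 zero_le)
  have \<sigma>j: "j \<le> \<sigma> j" for j unfolding \<sigma>_def by simp
  have \<sigma>mono: "\<sigma> j \<le> \<sigma> (Suc j)" for j unfolding \<sigma>_def by simp
  define h where "h j x = g (\<sigma> (Suc j)) x - g (\<sigma> j) x" for j x
  have hM[measurable]: "h j \<in> borel_measurable M" for j unfolding h_def by measurable
  have hint: "integrable M (h j)" for j unfolding h_def using int by auto
  have h2: "(\<integral>x. (h j x)\<^sup>2 \<partial>M) < ((1/2)^j)\<^sup>2" for j
  proof -
    have "(\<integral>x. (h j x)\<^sup>2 \<partial>M) = V (\<sigma> (Suc j)) - V (\<sigma> j)" unfolding h_def by (rule diffsq[OF \<sigma>mono])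
    also have "\<dots> \<le> L - V (\<sigma> j)" using VL by simp
    also have "\<dots> < (1/4)^j" using N \<sigma>N by blast
    also have "(1/4::real)^j = ((1/2)^j)\<^sup>2" by (simp add: power_mult_distrib[symmetric] power2_eq_square flip: power_mult power_add)
    finally show ?thesis .
  qed
  have h1: "(\<integral>\<^sup>+x. ennreal \<bar>h j x\<bar> \<partial>M) \<le> ennreal ((1/2)^j)" for j
  proof -
    let ?c = "(1/2::real)^j"
    have c: "?c > 0" by simp
    have i2: "integrable M (\<lambda>x. (h j x)\<^sup>2)" unfolding h_def power2_eq_square
      using int2 by (simp add: algebra_simps)
    have "(\<integral>\<^sup>+x. ennreal \<bar>h j x\<bar> \<partial>M) = ennreal (\<integral>x. \<bar>h j x\<bar> \<partial>M)"
      by (rule nn_integral_eq_integral) (use hint in auto)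
    also have "(\<integral>x. \<bar>h j x\<bar> \<partial>M) \<le> (\<integral>x. (?c + (h j x)\<^sup>2 / ?c) / 2 \<partial>M)"
      by (rule integral_mono) (use hint i2 abs_le_amgm[OF c] in auto)
    also have "\<dots> = (?c + (\<integral>x. (h j x)\<^sup>2 \<partial>M) / ?c) / 2"
      using i2 by (simp add: prob_space)
    also have "\<dots> \<le> ?c"
      using h2[of j] c by (simp add: field_simps power2_eq_square)
    finally show ?thesis by (simp add: ennreal_leI)
  qed
  define H where "H x = (\<Sum>j. ennreal \<bar>h j x\<bar>)" for x
  have HM[measurable]: "H \<in> borel_measurable M" unfolding H_def by measurable
  have geo: "(\<Sum>j. ennreal ((1/2::real)^(j + k))) = ennreal (2 * (1/2)^k)" for k
  proof -
    have "(\<lambda>j. (1/2::real)^(j+k)) sums ((1/2)^k * (1 / (1 - 1/2)))"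
      using sums_mult[OF geometric_sums[of "1/2::real"], of "(1/2)^k"] by (simp add: power_add mult.commute)
    then have "(\<lambda>j. (1/2::real)^(j+k)) sums (2 * (1/2)^k)" by (simp add: mult.commute)
    then show ?thesis by (subst suminf_ennreal_eq) auto
  qed
  have Hint: "(\<integral>\<^sup>+x. H x \<partial>M) \<le> 2"
  proof -
    have "(\<integral>\<^sup>+x. H x \<partial>M) = (\<Sum>j. \<integral>\<^sup>+x. ennreal \<bar>h j x\<bar> \<partial>M)"
      unfolding H_def by (rule nn_integral_suminf) measurable
    also have "\<dots> \<le> (\<Sum>j. ennreal ((1/2)^j))" by (intro suminf_le h1) auto
    also have "\<dots> = 2" using geo[of 0] by simp
    finally show ?thesis .
  qed
  have Hfin: "AE x in M. H x \<noteq> \<infinity>"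
    by (rule nn_integral_PInf_AE[OF HM]) (use Hint in \<open>auto simp: top_unique\<close>)
  define G where "G x = lim (\<lambda>j. g (\<sigma> j) x)" for x
  have GM[measurable]: "G \<in> borel_measurable M" unfolding G_def by measurable
  have tail: "AE x in M. ennreal \<bar>G x - g (\<sigma> k) x\<bar> \<le> (\<Sum>i. ennreal \<bar>h (i + k) x\<bar>)" for k
    using Hfin
  proof eventually_elim
    case (elim x)
    have sa: "summable (\<lambda>j. \<bar>h j x\<bar>)"
    proof (rule summable_suminf_not_top)
      show "(\<Sum>j. ennreal \<bar>h j x\<bar>) \<noteq> \<top>" using elim unfolding H_def infinity_ennreal_def .
    qed simp
    then have s: "summable (\<lambda>j. h j x)" by (rule summable_rabs_cancel)
    have tel: "g (\<sigma> j) x = g (\<sigma> 0) x + (\<Sum>i<j. h i x)" for j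
      using sum_lessThan_telescope[of "\<lambda>i. g (\<sigma> i) x" j] unfolding h_def by simp
    have telf: "(\<lambda>j. g (\<sigma> j) x) = (\<lambda>j. g (\<sigma> 0) x + (\<Sum>i<j. h i x))" by (rule ext, rule tel)
    have "(\<lambda>j. g (\<sigma> j) x) \<longlonglongrightarrow> g (\<sigma> 0) x + (\<Sum>i. h i x)"
      unfolding telf by (intro tendsto_add tendsto_const summable_LIMSEQ s)
    then have Gx: "G x = g (\<sigma> 0) x + (\<Sum>i. h i x)" unfolding G_def by (rule limI)
    have "G x - g (\<sigma> k) x = (\<Sum>i. h (i + k) x)"
      using Gx tel[of k] suminf_split_initial_segment[OF s, of k] by simp
    also have "\<bar>\<dots>\<bar> \<le> (\<Sum>i. \<bar>h (i + k) x\<bar>)"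
      by (rule summable_rabs[OF summable_ignore_initial_segment[OF sa, of k]])
    finally have "\<bar>G x - g (\<sigma> k) x\<bar> \<le> (\<Sum>i. \<bar>h (i + k) x\<bar>)" .
    then have "ennreal \<bar>G x - g (\<sigma> k) x\<bar> \<le> ennreal (\<Sum>i. \<bar>h (i + k) x\<bar>)" by (rule ennreal_leI)
    also have "\<dots> = (\<Sum>i. ennreal \<bar>h (i + k) x\<bar>)"
      by (rule suminf_ennreal2[symmetric]) (use summable_ignore_initial_segment[OF sa, of k] in auto)
    finally show ?case .
  qed
  have tailint: "(\<integral>\<^sup>+x. ennreal \<bar>G x - g (\<sigma> k) x\<bar> \<partial>M) \<le> ennreal (2 * (1/2)^k)" for k
  proof -
    have "(\<integral>\<^sup>+x. ennreal \<bar>G x - g (\<sigma> k) x\<bar> \<partial>M) \<le> (\<integral>\<^sup>+x. (\<Sum>i. ennreal \<bar>h (i + k) x\<bar>) \<partial>M)"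
      by (rule nn_integral_mono_AE[OF tail])
    also have "\<dots> = (\<Sum>i. \<integral>\<^sup>+x. ennreal \<bar>h (i + k) x\<bar> \<partial>M)"
      by (rule nn_integral_suminf) measurable
    also have "\<dots> \<le> (\<Sum>i. ennreal ((1/2)^(i+k)))" by (intro suminf_le h1) auto
    also have "\<dots> = ennreal (2 * (1/2)^k)" by (rule geo)
    finally show ?thesis .
  qed
  have Gint: "integrable M G"
  proof (rule integrableI_bounded)
    have "(\<integral>\<^sup>+x. ennreal (norm (G x)) \<partial>M) \<le> (\<integral>\<^sup>+x. ennreal \<bar>G x - g (\<sigma> 0) x\<bar> + ennreal \<bar>g (\<sigma> 0) x\<bar> \<partial>M)"
      by (intro nn_integral_mono) (auto simp flip: ennreal_plus intro!: ennreal_leI)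
    also have "\<dots> = (\<integral>\<^sup>+x. ennreal \<bar>G x - g (\<sigma> 0) x\<bar> \<partial>M) + (\<integral>\<^sup>+x. ennreal \<bar>g (\<sigma> 0) x\<bar> \<partial>M)"
      by (rule nn_integral_add) auto
    also have "\<dots> < \<infinity>"
      using tailint[of 0] int[of "\<sigma> 0"] by (auto simp: integrable_iff_bounded top.not_eq_extremum le_less_trans)
    finally show "(\<integral>\<^sup>+x. ennreal (norm (G x)) \<partial>M) < \<infinity>" .
  qed simp
  have "AE x in M. condE M F n G x = g n x" for n
  proof -
    define X where "X = (\<integral>\<^sup>+x. ennreal \<bar>condE M F n G x - g n x\<bar> \<partial>M)"
    have Xle: "X \<le> ennreal (2 * (1/2)^j)" if "n \<le> j" for j
    proof -
      have "n \<le> \<sigma> j" using that \<sigma>j le_trans by blast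
      have ae: "AE x in M. condE M F n G x - g n x = condE M F n (\<lambda>x. G x - g (\<sigma> j) x) x"
        using condE_diff[OF P Fi Gint int[of "\<sigma> j"], where n=n] tower[OF \<open>n \<le> \<sigma> j\<close>] by eventually_elim auto
      have "X = (\<integral>\<^sup>+x. ennreal \<bar>condE M F n (\<lambda>x. G x - g (\<sigma> j) x) x\<bar> \<partial>M)"
        unfolding X_def by (rule nn_integral_cong_AE) (use ae in \<open>auto elim: eventually_mono\<close>)
      also have "\<dots> \<le> (\<integral>\<^sup>+x. ennreal \<bar>G x - g (\<sigma> j) x\<bar> \<partial>M)"
        by (rule condE_abs_int[OF P Fi]) (use Gint int in auto)
      also have "\<dots> \<le> ennreal (2 * (1/2)^j)" by (rule tailint)
      finally show ?thesis .
    qed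
    have Xfin: "X \<noteq> \<infinity>" using Xle[of n] by (auto simp: top_unique)
    have "enn2real X \<le> 2 * (1/2)^j" if "n \<le> j" for j
      using Xle[OF that] by (simp add: enn2real_leI)
    moreover have "(\<lambda>j. 2 * (1/2::real)^j) \<longlonglongrightarrow> 0"
      by (intro tendsto_mult_right_zero LIMSEQ_power_zero) auto
    ultimately have "enn2real X \<le> 0"
      by (intro LIMSEQ_le_const[where X="\<lambda>j. 2 * (1/2)^j"]) auto
    then have "X = 0" using Xfin by (cases X) auto
    then have "AE x in M. ennreal \<bar>condE M F n G x - g n x\<bar> = 0"
      unfolding X_def by (subst (asm) nn_integral_0_iff_AE) (auto intro!: condE_meas[OF P Fi])
    then show ?thesis by eventually_elim auto
  qed
  with Gint show ?thesis by blast
qed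


definition cc :: "int \<Rightarrow> real" where "cc k = 2 powr (real_of_int k)"

definition incr :: "(nat \<Rightarrow> 'a \<Rightarrow> real) \<Rightarrow> (nat \<Rightarrow> 'a \<Rightarrow> real) \<Rightarrow> int \<Rightarrow> nat \<Rightarrow> 'a \<Rightarrow> real" where
  "incr lam f k i x = (if cc k < lam (i - 1) x \<and> lam (i - 1) x \<le> cc (k + 1) then f i x - f (i - 1) x else 0)"

definition Dk :: "(nat \<Rightarrow> 'a \<Rightarrow> real) \<Rightarrow> (nat \<Rightarrow> 'a \<Rightarrow> real) \<Rightarrow> int \<Rightarrow> nat \<Rightarrow> 'a \<Rightarrow> real" where
  "Dk lam f k n x = (\<Sum>i\<in>{1..n}. incr lam f k i x)"

definition nuk :: "(nat \<Rightarrow> 'a \<Rightarrow> real) \<Rightarrow> int \<Rightarrow> 'a \<Rightarrow> enat" where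
  "nuk lam k x = (if \<exists>n. cc k < lam n x then enat (LEAST n. cc k < lam n x) else \<infinity>)"

lemma cc_pos: "cc k > 0" unfolding cc_def by simp

lemma cc_Suc: "cc (k + 1) = 2 * cc k"
  unfolding cc_def by (simp add: powr_add)

lemma cc_mono: "k \<le> l \<Longrightarrow> cc k \<le> cc l"
  unfolding cc_def by simp

lemma cc_strict: "k < l \<Longrightarrow> cc k < cc l"
  unfolding cc_def by simp

lemma cc_unique_interval:
  assumes "t > 0"
  shows "\<exists>!k. cc k < t \<and> t \<le> cc (k + 1)"
proof -
  define K where "K = \<lceil>log 2 t\<rceil> - 1"
  have "cc K < t"
  proof -
    have "real_of_int K < log 2 t" unfolding K_def by linarith
    then have "2 powr real_of_int K < 2 powr (log 2 t)" by simp
    then show ?thesis using assms unfolding cc_def by simp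
  qed
  moreover have "t \<le> cc (K + 1)"
  proof -
    have "log 2 t \<le> real_of_int (K + 1)" unfolding K_def by linarith
    then have "2 powr (log 2 t) \<le> 2 powr real_of_int (K + 1)" by simp
    then show ?thesis using assms unfolding cc_def by simp
  qed
  moreover have "k = K" if "cc k < t" "t \<le> cc (k + 1)" for k
  proof (rule ccontr)
    assume "k \<noteq> K"
    then consider "k + 1 \<le> K" | "K + 1 \<le> k" by linarith
    then show False
    proof cases
      case 1 then have "cc (k + 1) \<le> cc K" by (rule cc_mono)
      then show False using that \<open>cc K < t\<close> by linarith
    next
      case 2 then have "cc (K + 1) \<le> cc k" by (rule cc_mono)
      then show False using that \<open>t \<le> cc (K + 1)\<close> by linarith
    qed
  qed
  ultimately show ?thesis by blast
qed

lemma Lambda_mono: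
  assumes "lam \<in> Lambda M F" "x \<in> space M" "m \<le> n"
  shows "lam m x \<le> lam n x"
proof -
  have "lam i x \<le> lam (Suc i) x" for i using assms(1,2) unfolding Lambda_def by auto
  then show ?thesis using assms(3) by (rule lift_Suc_mono_le)
qed

lemma Lambda_nonneg:
  assumes "lam \<in> Lambda M F" "x \<in> space M"
  shows "0 \<le> lam n x"
  using assms unfolding Lambda_def by auto

lemma Lambda_meas:
  assumes "lam \<in> Lambda M F"
  shows "lam n \<in> borel_measurable (F n)"
  using assms unfolding Lambda_def by auto

lemma nuk_le_iff:
  assumes "lam \<in> Lambda M F" "x \<in> space M"
  shows "nuk lam k x \<le> enat n \<longleftrightarrow> cc k < lam n x"
proof (cases "\<exists>m. cc k < lam m x")
  case True
  then have nu: "nuk lam k x = enat (LEAST m. cc k < lam m x)" by (simp add: nuk_def)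
  show ?thesis
  proof
    assume "nuk lam k x \<le> enat n"
    then have le: "(LEAST m. cc k < lam m x) \<le> n" using nu by simp
    have "cc k < lam (LEAST m. cc k < lam m x) x" using True by (rule LeastI_ex)
    also have "\<dots> \<le> lam n x" by (rule Lambda_mono[OF assms le])
    finally show "cc k < lam n x" .
  next
    assume "cc k < lam n x"
    then have "(LEAST m. cc k < lam m x) \<le> n" by (rule Least_le)
    then show "nuk lam k x \<le> enat n" using nu by simp
  qed
next
  case False
  then show ?thesis by (simp add: nuk_def)
qed

lemma nuk_stopping:
  assumes "is_filtration M F" "lam \<in> Lambda M F"
  shows "is_stopping_time M F (nuk lam k)"
  unfolding is_stopping_time_def
proof
  fix n :: nat
  have eq: "{x \<in> space M. nuk lam k x \<le> enat n} = {x \<in> space (F n). cc k < lam n x}"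
    using nuk_le_iff[OF assms(2)] filt_space[OF assms(1)] by auto
  have [measurable]: "lam n \<in> borel_measurable (F n)" by (rule Lambda_meas[OF assms(2)])
  show "{x \<in> space M. nuk lam k x \<le> enat n} \<in> sets (F n)" unfolding eq by measurable
qed

lemma nuk_B:
  assumes "lam \<in> Lambda M F"
  shows "B_set M (nuk lam k) = {x \<in> space M. ennreal (cc k) < lam_inf lam x}"
proof -
  have "nuk lam k x < \<infinity> \<longleftrightarrow> ennreal (cc k) < lam_inf lam x" if x: "x \<in> space M" for x
  proof -
    have "nuk lam k x < \<infinity> \<longleftrightarrow> (\<exists>n. cc k < lam n x)" by (simp add: nuk_def)
    also have "\<dots> \<longleftrightarrow> (\<exists>n. ennreal (cc k) < ennreal (lam n x))"
      using cc_pos[of k] by (simp add: ennreal_less_iff)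
    also have "\<dots> \<longleftrightarrow> ennreal (cc k) < lam_inf lam x"
      unfolding lam_inf_def by (simp add: less_SUP_iff)
    finally show ?thesis .
  qed
  then show ?thesis unfolding B_set_def by auto
qed

lemma nuk_B_sets:
  assumes "is_filtration M F" "lam \<in> Lambda M F"
  shows "B_set M (nuk lam k) \<in> sets M"
proof -
  have [measurable]: "lam n \<in> borel_measurable M" for n using filt_meas_M[OF assms(1) Lambda_meas[OF assms(2)]] .
  have [measurable]: "lam_inf lam \<in> borel_measurable M" unfolding lam_inf_def by measurable
  show ?thesis unfolding nuk_B[OF assms(2)] by measurable
qed

lemma Dk_zero:
  assumes "lam \<in> Lambda M F" "x \<in> space M" "enat n \<le> nuk lam k x"
  shows "Dk lam f k n x = 0"
proof -
  have "incr lam f k i x = 0" if "i \<in> {1..n}" for i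
  proof -
    have "\<not> cc k < lam (i - 1) x"
    proof
      assume "cc k < lam (i - 1) x"
      then have "nuk lam k x \<le> enat (i - 1)" using nuk_le_iff[OF assms(1,2)] by simp
      with assms(3) have "enat n \<le> enat (i - 1)" by (rule order_trans)
      then show False using that by auto
    qed
    then show ?thesis unfolding incr_def by simp
  qed
  then show ?thesis unfolding Dk_def by simp
qed

lemma Dk_out:
  assumes "lam \<in> Lambda M F" "x \<in> space M" "x \<notin> B_set M (nuk lam k)"
  shows "Dk lam f k n x = 0"
  using assms Dk_zero[OF assms(1,2)] unfolding B_set_def by auto


lemma mart_props:
  assumes "f \<in> martingales M F"
  shows "AE x in M. f 0 x = 0" "f n \<in> borel_measurable (F n)" "integrable M (f n)"
    "AE x in M. condE M F n (f (Suc n)) x = f n x"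
  using assms unfolding martingales_def by auto

lemma incr_meas:
  assumes Fi: "is_filtration M F" and lam: "lam \<in> Lambda M F" and f: "f \<in> martingales M F"
  shows "incr lam f k i \<in> borel_measurable (F i)"
proof -
  have [measurable]: "lam (i - 1) \<in> borel_measurable (F i)"
    by (rule filt_meas_mono[OF Fi _ Lambda_meas[OF lam]]) simp
  have [measurable]: "f (i - 1) \<in> borel_measurable (F i)"
    by (rule filt_meas_mono[OF Fi _ mart_props(2)[OF f]]) simp
  have [measurable]: "f i \<in> borel_measurable (F i)" by (rule mart_props(2)[OF f])
  show ?thesis unfolding incr_def by measurable
qed

lemma Dk_meas:
  assumes Fi: "is_filtration M F" and lam: "lam \<in> Lambda M F" and f: "f \<in> martingales M F"
  shows "Dk lam f k n \<in> borel_measurable (F n)"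
proof -
  have "incr lam f k i \<in> borel_measurable (F n)" if "i \<in> {1..n}" for i
    by (rule filt_meas_mono[OF Fi _ incr_meas[OF Fi lam f]]) (use that in auto)
  then show ?thesis unfolding Dk_def by (intro borel_measurable_sum) auto
qed

definition Aset :: "'a measure \<Rightarrow> (nat \<Rightarrow> 'a \<Rightarrow> real) \<Rightarrow> int \<Rightarrow> nat \<Rightarrow> 'a set" where
  "Aset M lam k n = {x \<in> space M. cc k < lam n x \<and> lam n x \<le> cc (k + 1)}"

lemma Aset_sets:
  assumes Fi: "is_filtration M F" and lam: "lam \<in> Lambda M F"
  shows "Aset M lam k n \<in> sets (F n)"
proof -
  have [measurable]: "lam n \<in> borel_measurable (F n)" by (rule Lambda_meas[OF lam])
  have "Aset M lam k n = {x \<in> space (F n). cc k < lam n x \<and> lam n x \<le> cc (k + 1)}"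
    unfolding Aset_def using filt_space[OF Fi] by simp
  also have "\<dots> \<in> sets (F n)" by measurable
  finally show ?thesis .
qed

lemma incr_Suc_eq:
  assumes "x \<in> space M"
  shows "incr lam f k (Suc n) x = indicator (Aset M lam k n) x * (f (Suc n) x - f n x)"
  using assms unfolding incr_def Aset_def by (auto simp: indicator_def)

lemma incr_int:
  assumes P: "prob_space M" and Fi: "is_filtration M F" and lam: "lam \<in> Lambda M F" and f: "f \<in> martingales M F"
  shows "integrable M (incr lam f k i)"
proof (cases i)
  case 0
  have "incr lam f k 0 = (\<lambda>x. 0)" by (simp add: incr_def fun_eq_iff)
  then show ?thesis using 0 by simp
next
  case (Suc n)
  have A: "Aset M lam k n \<in> sets M" by (rule filt_sets_M[OF Fi Aset_sets[OF Fi lam]])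
  have "integrable M (\<lambda>x. (f (Suc n) x - f n x) * indicator (Aset M lam k n) x)"
    by (intro integrable_real_mult_indicator A Bochner_Integration.integrable_diff mart_props(3)[OF f])
  moreover have "integrable M (incr lam f k (Suc n)) \<longleftrightarrow> integrable M (\<lambda>x. (f (Suc n) x - f n x) * indicator (Aset M lam k n) x)"
    by (rule Bochner_Integration.integrable_cong) (auto simp: incr_Suc_eq mult.commute)
  ultimately show ?thesis unfolding Suc by simp
qed

lemma Dk_int:
  assumes P: "prob_space M" and Fi: "is_filtration M F" and lam: "lam \<in> Lambda M F" and f: "f \<in> martingales M F"
  shows "integrable M (Dk lam f k n)"
  unfolding Dk_def by (rule Bochner_Integration.integrable_sum) (rule incr_int[OF assms])

lemma Dk_Suc: "Dk lam f k (Suc n) x = Dk lam f k n x + incr lam f k (Suc n) x"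
  unfolding Dk_def by simp

lemma Dk_step:
  assumes P: "prob_space M" and Fi: "is_filtration M F" and lam: "lam \<in> Lambda M F" and f: "f \<in> martingales M F"
  shows "AE x in M. condE M F n (Dk lam f k (Suc n)) x = Dk lam f k n x"
proof -
  have cM[measurable]: "condE M F m h \<in> borel_measurable M" for m h using condE_meas(2)[OF P Fi] .
  have fM[measurable]: "f m \<in> borel_measurable M" for m using filt_meas_M[OF Fi mart_props(2)[OF f]] .
  have A: "Aset M lam k n \<in> sets (F n)" by (rule Aset_sets[OF Fi lam])
  have AM: "Aset M lam k n \<in> sets M" by (rule filt_sets_M[OF Fi A])
  have indF: "indicator (Aset M lam k n) \<in> borel_measurable (F n)" using A by simp
  have eq1: "Dk lam f k (Suc n) = (\<lambda>x. Dk lam f k n x + incr lam f k (Suc n) x)"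
    by (simp add: Dk_Suc fun_eq_iff)
  have a1: "AE x in M. condE M F n (Dk lam f k (Suc n)) x = condE M F n (Dk lam f k n) x + condE M F n (incr lam f k (Suc n)) x"
    unfolding eq1 by (rule condE_add[OF P Fi Dk_int[OF assms] incr_int[OF assms]])
  have a2: "AE x in M. condE M F n (Dk lam f k n) x = Dk lam f k n x"
    by (rule condE_self[OF P Fi Dk_int[OF assms] Dk_meas[OF Fi lam f]])
  have dint: "integrable M (\<lambda>x. f (Suc n) x - f n x)"
    by (intro Bochner_Integration.integrable_diff mart_props(3)[OF f])
  have a3: "AE x in M. condE M F n (incr lam f k (Suc n)) x = condE M F n (\<lambda>x. indicator (Aset M lam k n) x * (f (Suc n) x - f n x)) x"
  proof (rule condE_cong[OF P Fi])
    show "AE x in M. incr lam f k (Suc n) x = indicator (Aset M lam k n) x * (f (Suc n) x - f n x)"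
      by (rule AE_I2) (rule incr_Suc_eq)
    show "incr lam f k (Suc n) \<in> borel_measurable M"
      by (rule filt_meas_M[OF Fi incr_meas[OF Fi lam f]])
    show "(\<lambda>x. indicator (Aset M lam k n) x * (f (Suc n) x - f n x)) \<in> borel_measurable M"
      using AM by measurable
  qed
  have a4: "AE x in M. condE M F n (\<lambda>x. indicator (Aset M lam k n) x * (f (Suc n) x - f n x)) x = indicator (Aset M lam k n) x * condE M F n (\<lambda>x. f (Suc n) x - f n x) x"
  proof (rule condE_mult[OF P Fi indF])
    show "integrable M (\<lambda>x. indicator (Aset M lam k n) x * (f (Suc n) x - f n x))"
      using integrable_real_mult_indicator[OF AM dint] by (simp add: mult.commute)
  qed measurable
  have a5: "AE x in M. condE M F n (\<lambda>x. f (Suc n) x - f n x) x = condE M F n (f (Suc n)) x - condE M F n (f n) x"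
    by (rule condE_diff[OF P Fi mart_props(3)[OF f] mart_props(3)[OF f]])
  have a6: "AE x in M. condE M F n (f n) x = f n x"
    by (rule condE_self[OF P Fi mart_props(3)[OF f] mart_props(2)[OF f]])
  from a1 a2 a3 a4 a5 a6 mart_props(4)[OF f, of n] show ?thesis
    by eventually_elim simp
qed

lemma has_sum_single_at:
  fixes d :: "'b::{comm_monoid_add, topological_space}"
  shows "((\<lambda>k. if k = K then d else 0) has_sum d) UNIV"
proof -
  have "((\<lambda>k. if k = K then d else 0) has_sum d) UNIV \<longleftrightarrow> ((\<lambda>k. if k = K then d else 0) has_sum d) {K}"
    by (rule has_sum_cong_neutral) auto
  moreover have "((\<lambda>k. if k = K then d else 0) has_sum d) {K}"
    using has_sum_finite[of "{K}" "\<lambda>k. if k = K then d else 0"] by simp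
  ultimately show ?thesis by simp
qed

lemma has_sum_finite_sum:
  fixes h :: "'i \<Rightarrow> 'k \<Rightarrow> 'b::{topological_comm_monoid_add}"
  assumes "finite I" "\<And>i. i \<in> I \<Longrightarrow> (h i has_sum s i) A"
  shows "((\<lambda>k. \<Sum>i\<in>I. h i k) has_sum (\<Sum>i\<in>I. s i)) A"
  using assms
proof (induction I rule: finite_induct)
  case empty then show ?case by simp
next
  case (insert j I)
  then show ?case by (simp add: has_sum_add)
qed

lemma incr_has_sum:
  assumes lam: "lam \<in> Lambda M F" and x: "x \<in> space M"
    and z: "lam (i - 1) x = 0 \<Longrightarrow> f i x = f (i - 1) x"
  shows "((\<lambda>k. incr lam f k i x) has_sum (f i x - f (i - 1) x)) UNIV"
proof (cases "lam (i - 1) x = 0")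
  case True
  have "incr lam f k i x = 0" for k
  proof -
    have "\<not> cc k < lam (i - 1) x" using True cc_pos[of k] by linarith
    then show ?thesis unfolding incr_def by (simp only: if_False simp_thms)
  qed
  then have "(\<lambda>k. incr lam f k i x) = (\<lambda>k. 0)" by (simp add: fun_eq_iff)
  moreover have "f i x - f (i - 1) x = 0" using z[OF True] by linarith
  ultimately show ?thesis by (simp only: has_sum_0_simp)
next
  case False
  then have pos: "lam (i - 1) x > 0" using Lambda_nonneg[OF lam x] by (simp add: order_less_le)
  obtain K where K: "cc K < lam (i - 1) x \<and> lam (i - 1) x \<le> cc (K + 1)"
    and Ku: "\<And>k. cc k < lam (i - 1) x \<and> lam (i - 1) x \<le> cc (k + 1) \<Longrightarrow> k = K"
    using cc_unique_interval[OF pos] unfolding Ex1_def by metis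
  have "incr lam f k i x = (if k = K then f i x - f (i - 1) x else 0)" for k
  proof (cases "k = K")
    case True then show ?thesis using K unfolding incr_def by simp
  next
    case False then have "\<not> (cc k < lam (i - 1) x \<and> lam (i - 1) x \<le> cc (k + 1))" using Ku[of k] by blast
    then show ?thesis using False unfolding incr_def by (simp only: if_False)
  qed
  then show ?thesis using has_sum_single_at[of K "f i x - f (i - 1) x"] by simp
qed

lemma sum_diff_tel: fixes f :: "nat \<Rightarrow> 'a \<Rightarrow> real" shows "(\<Sum>i\<in>{1..n}. f i x - f (i - 1) x) = f n x - f 0 x"
  by (induction n) auto

lemma Dk_has_sum:
  assumes lam: "lam \<in> Lambda M F" and x: "x \<in> space M" and f0: "f 0 x = 0"
    and z: "\<And>i. i \<ge> 1 \<Longrightarrow> lam (i - 1) x = 0 \<Longrightarrow> f i x = f (i - 1) x"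
  shows "((\<lambda>k. Dk lam f k n x) has_sum f n x) UNIV"
proof -
  have "((\<lambda>k. \<Sum>i\<in>{1..n}. incr lam f k i x) has_sum (\<Sum>i\<in>{1..n}. f i x - f (i - 1) x)) UNIV"
  proof (rule has_sum_finite_sum)
    fix i assume "i \<in> {1..n}"
    then have "1 \<le> i" by simp
    show "((\<lambda>k. incr lam f k i x) has_sum (f i x - f (i - 1) x)) UNIV"
      by (rule incr_has_sum[OF lam x]) (rule z[OF \<open>1 \<le> i\<close>])
  qed simp
  then show ?thesis unfolding Dk_def sum_diff_tel f0 by simp
qed


lemma epow_ennreal: "0 \<le> x \<Longrightarrow> epow (ennreal x) p = ennreal (x powr p)"
  unfolding epow_def by simp

lemma epow_top[simp]: "epow \<top> p = \<top>"
  unfolding epow_def by simp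

lemma epow_zero[simp]: "epow 0 p = 0"
  unfolding epow_def by simp

lemma epow_mono: assumes "t \<le> s" "0 \<le> p" shows "epow t p \<le> epow s p"
proof (cases "s = \<top>")
  case True then show ?thesis by simp
next
  case False
  then have "t \<noteq> \<top>" using assms(1) by (auto simp: top_unique)
  then obtain a b where "t = ennreal a" "s = ennreal b" "0 \<le> a" "0 \<le> b" using False
    by (metis ennreal_cases)
  then show ?thesis using assms by (auto simp: epow_ennreal intro!: ennreal_leI powr_mono2)
qed

lemma epow_mult: assumes "c > 0" "p > 0" shows "epow (ennreal c * t) p = ennreal (c powr p) * epow t p"
proof (cases "t = \<top>")
  case True then show ?thesis using assms by (simp add: ennreal_mult_top)
next
  case False
  then obtain a where "t = ennreal a" "0 \<le> a" by (metis ennreal_cases)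
  then show ?thesis using assms by (simp add: epow_ennreal powr_mult flip: ennreal_mult)
qed

lemma epow_epow: assumes "p > 0" "q > 0" shows "epow (epow t p) q = epow t (p * q)"
proof (cases "t = \<top>")
  case True then show ?thesis by simp
next
  case False
  then obtain a where "t = ennreal a" "0 \<le> a" by (metis ennreal_cases)
  then show ?thesis using assms by (simp add: epow_ennreal powr_powr)
qed

lemma epow_eq0: assumes "epow t p = 0" shows "t = 0"
proof (cases "t = \<top>")
  case True then show ?thesis using assms by simp
next
  case False
  then obtain a where a: "t = ennreal a" "0 \<le> a" by (metis ennreal_cases)
  then have "a powr p = 0" using assms by (simp add: epow_ennreal)
  then show ?thesis using a by simp
qed

lemma infsum_nat_ennreal: "infsum f (UNIV :: nat set) = suminf (f :: nat \<Rightarrow> ennreal)"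
proof -
  have "(f has_sum infsum f UNIV) UNIV" by (rule has_sum_infsum, rule nonneg_summable_on_complete) simp
  then have "f sums infsum f UNIV" by (rule has_sum_imp_sums)
  then show ?thesis by (simp add: sums_iff)
qed

lemma ennreal_infsum_SUP: "infsum (f :: 'b \<Rightarrow> ennreal) A = (SUP F\<in>{F. finite F \<and> F \<subseteq> A}. sum f F)"
  by (rule nonneg_infsum_complete) simp

lemma lr_le:
  fixes t :: "'b \<Rightarrow> ennreal"
  assumes r: "0 < r" "r \<le> 1"
  shows "infsum t UNIV \<le> epow (infsum (\<lambda>k. epow (t k) r) UNIV) (1 / r)"
proof -
  define T where "T = infsum (\<lambda>k. epow (t k) r) UNIV"
  have Tk: "epow (t k) r \<le> T" for k
  proof -
    have "sum (\<lambda>k. epow (t k) r) {k} \<le> T" unfolding T_def ennreal_infsum_SUP by (rule SUP_upper) auto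
    then show ?thesis by simp
  qed
  consider "T = \<top>" | "T = 0" | "0 < T" "T < \<top>"
    using not_gr_zero top.not_eq_extremum by blast
  then show ?thesis
  proof cases
    case 1 then show ?thesis by (simp add: T_def[symmetric])
  next
    case 2
    then have "t k = 0" for k using Tk[of k] by (rule_tac epow_eq0[of _ r]) simp
    then have "t = (\<lambda>_. 0)" by auto
    then show ?thesis by simp
  next
    case 3
    define T' where "T' = enn2real T"
    have T'1: "T = ennreal T'" unfolding T'_def using 3(2) by (simp add: less_top)
    have T'2: "T' > 0" unfolding T'_def using 3 by (simp add: enn2real_positive_iff)
    note T' = T'1 T'2
    define c where "c = T' powr (1/r) / T'"
    have tk: "t k \<le> ennreal c * epow (t k) r" for k
    proof -
      have "t k \<noteq> \<top>" using Tk[of k] 3 by (auto simp: top_unique)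
      then obtain s where s: "t k = ennreal s" "0 \<le> s" by (metis ennreal_cases)
      have sr: "s powr r \<le> T'" using Tk[of k] s T' by (simp add: epow_ennreal)
      have "s \<le> c * s powr r"
      proof (cases "s = 0")
        case True then show ?thesis by simp
      next
        case False
        then have sp: "s > 0" using s by simp
        define u where "u = s powr r / T'"
        have u: "0 < u" "u \<le> 1" using sr sp T' unfolding u_def by auto
        have "s = (s powr r) powr (1/r)" using sp r by (simp add: powr_powr)
        also have "\<dots> = (T' * u) powr (1/r)" using T' unfolding u_def by simp
        also have "\<dots> = T' powr (1/r) * u powr (1/r)" using T' u by (simp add: powr_mult)
        also have "\<dots> \<le> T' powr (1/r) * u"
          using u r by (intro mult_left_mono powr_le_one_le) (auto simp: field_simps)
        also have "\<dots> = c * s powr r" unfolding c_def u_def by simp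
        finally show ?thesis .
      qed
      then have "ennreal s \<le> ennreal (c * s powr r)" by (rule ennreal_leI)
      also have "\<dots> = ennreal c * ennreal (s powr r)"
        using T' by (intro ennreal_mult) (auto simp: c_def)
      finally show ?thesis using s by (simp add: epow_ennreal)
    qed
    have "infsum t UNIV \<le> ennreal c * T"
      unfolding ennreal_infsum_SUP
    proof (rule SUP_least)
      fix F :: "'b set" assume F: "F \<in> {F. finite F \<and> F \<subseteq> UNIV}"
      have "sum t F \<le> sum (\<lambda>k. ennreal c * epow (t k) r) F" by (intro sum_mono tk)
      also have "\<dots> = ennreal c * sum (\<lambda>k. epow (t k) r) F" by (simp add: sum_distrib_left)
      also have "sum (\<lambda>k. epow (t k) r) F \<le> T" unfolding T_def ennreal_infsum_SUP by (rule SUP_upper) (use F in auto)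
      then have "ennreal c * sum (\<lambda>k. epow (t k) r) F \<le> ennreal c * T" by (rule mult_left_mono) simp
      finally show "sum t F \<le> ennreal c * T" .
    qed
    also have "ennreal c * T = ennreal (T' powr (1/r))"
      using T' unfolding c_def by (simp flip: ennreal_mult)
    also have "\<dots> = epow T (1/r)" using T' by (simp add: epow_ennreal)
    finally show ?thesis unfolding T_def .
  qed
qed


lemma epow_one[simp]: "epow t 1 = t"
proof (cases "t = \<top>")
  case True then show ?thesis by simp
next
  case False
  then obtain a where "t = ennreal a" "0 \<le> a" by (metis ennreal_cases)
  then show ?thesis by (simp add: epow_ennreal)
qed

lemma infsum_ennreal_cmult_le:
  fixes g :: "'b \<Rightarrow> ennreal"
  shows "infsum (\<lambda>k. c * g k) A \<le> c * infsum g A"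
  unfolding ennreal_infsum_SUP[of "\<lambda>k. c * g k"]
proof (rule SUP_least)
  fix F assume F: "F \<in> {F. finite F \<and> F \<subseteq> A}"
  have "sum (\<lambda>k. c * g k) F = c * sum g F" by (simp add: sum_distrib_left)
  also have "sum g F \<le> infsum g A" unfolding ennreal_infsum_SUP by (rule SUP_upper) (use F in auto)
  then have "c * sum g F \<le> c * infsum g A" by (rule mult_left_mono) simp
  finally show "sum (\<lambda>k. c * g k) F \<le> c * infsum g A" .
qed

lemma infsum_ennreal_mono:
  fixes g h :: "'b \<Rightarrow> ennreal"
  assumes "\<And>k. g k \<le> h k"
  shows "infsum g A \<le> infsum h A"
  by (rule infsum_mono) (auto intro: nonneg_summable_on_complete assms)

lemma cc_powr: "cc (K - int j) powr r = cc K powr r * (2 powr (- r)) ^ j"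
proof -
  have "((2::real) powr (- r)) ^ j = (2 powr (- r)) powr (real j)" by (simp add: powr_realpow)
  also have "\<dots> = 2 powr (- r * real j)" by (simp add: powr_powr)
  finally have e: "(2::real) powr (- r * real j) = (2 powr (- r)) ^ j" by simp
  have "cc (K - int j) powr r = 2 powr (real_of_int K * r + (- r * real j))"
    unfolding cc_def by (simp add: powr_powr algebra_simps)
  also have "\<dots> = 2 powr (real_of_int K * r) * (2 powr (- r)) ^ j"
    by (simp only: powr_add e)
  also have "\<dots> = cc K powr r * (2 powr (- r)) ^ j" unfolding cc_def by (simp add: powr_powr)
  finally show ?thesis .
qed

lemma geo_int:
  assumes r: "0 < r"
  shows "infsum (\<lambda>k::int. ennreal (cc k powr r) * (if ennreal (cc k) < L then 1 else 0)) UNIV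
     \<le> ennreal (1 / (1 - 2 powr (- r))) * epow L r"
proof -
  define q where "q = (2::real) powr (- r)"
  have "(2::real) powr (- r) < 2 powr 0" using r by (subst powr_less_cancel_iff) auto
  then have q1: "q < 1" using r unfolding q_def by simp
  have q0: "0 < q" unfolding q_def by simp
  note q = q0 q1
  show ?thesis
  proof (cases "L = \<top>")
    case True
    have "1 / (1 - 2 powr (- r)) > 0" using q unfolding q_def by simp
    then have "ennreal (1 / (1 - 2 powr (- r))) \<noteq> 0" by (simp only: ennreal_eq_0_iff not_le)
    then show ?thesis using True by (simp add: ennreal_mult_top)
  next
    case False
    then obtain l where l: "L = ennreal l" "0 \<le> l" by (metis ennreal_cases)
    show ?thesis
    proof (cases "l = 0")
      case True
      have "\<not> ennreal (cc k) < L" for k using True l by simp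
      then show ?thesis by simp
    next
      case False
      then have lp: "l > 0" using l by simp
      obtain K where K: "cc K < l" "l \<le> cc (K + 1)"
        using cc_unique_interval[OF lp] by blast
      have cond: "ennreal (cc k) < L \<longleftrightarrow> k \<le> K" for k
      proof -
        have "ennreal (cc k) < L \<longleftrightarrow> cc k < l" using l cc_pos[of k] by (simp add: ennreal_less_iff)
        also have "\<dots> \<longleftrightarrow> k \<le> K"
        proof
          assume "cc k < l"
          show "k \<le> K"
          proof (rule ccontr)
            assume "\<not> k \<le> K" then have "K + 1 \<le> k" by simp
            then have "cc (K + 1) \<le> cc k" by (rule cc_mono)
            then show False using K \<open>cc k < l\<close> by linarith
          qed
        next
          assume "k \<le> K" then have "cc k \<le> cc K" by (rule cc_mono)
          then show "cc k < l" using K by linarith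
        qed
        finally show ?thesis .
      qed
      define g where "g k = ennreal (cc k powr r) * (if ennreal (cc k) < L then 1 else 0)" for k
      have "infsum g UNIV \<le> ennreal (cc K powr r / (1 - q))"
        unfolding ennreal_infsum_SUP
      proof (rule SUP_least)
        fix F :: "int set" assume F: "F \<in> {F. finite F \<and> F \<subseteq> UNIV}"
        then have fin: "finite F" by simp
        define m where "m = Min (insert K F)"
        have m: "\<And>k. k \<in> F \<Longrightarrow> m \<le> k" unfolding m_def using fin by simp
        define N where "N = nat (K - m) + 1"
        define e where "e j = K - int j" for j :: nat
        have sub: "F \<inter> {..K} \<subseteq> e ` {..<N}"
        proof
          fix k assume k: "k \<in> F \<inter> {..K}"
          then have "k = e (nat (K - k))" "nat (K - k) < N" using m[of k] unfolding e_def N_def by auto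
          then show "k \<in> e ` {..<N}" by blast
        qed
        have inj: "inj_on e {..<N}" unfolding e_def inj_on_def by auto
        have "sum g F = sum g (F \<inter> {..K})"
          by (rule sum.mono_neutral_right) (auto simp: g_def cond fin)
        also have "\<dots> \<le> sum g (e ` {..<N})"
          by (rule sum_mono2) (use sub in auto)
        also have "\<dots> = (\<Sum>j<N. g (e j))" by (rule sum.reindex[OF inj, unfolded comp_def])
        also have "\<dots> = (\<Sum>j<N. ennreal (cc K powr r * q ^ j))"
          by (rule sum.cong) (auto simp: g_def cond e_def cc_powr q_def)
        also have "\<dots> = ennreal (\<Sum>j<N. cc K powr r * q ^ j)"
          by (rule sum_ennreal) (use q in auto)
        also have "(\<Sum>j<N. cc K powr r * q ^ j) \<le> cc K powr r / (1 - q)"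
        proof -
          have "(\<Sum>j<N. q ^ j) = (1 - q ^ N) / (1 - q)" using q by (simp add: sum_gp_strict)
          also have "\<dots> \<le> 1 / (1 - q)" using q by (simp add: divide_right_mono)
          finally have "(\<Sum>j<N. q ^ j) \<le> 1 / (1 - q)" .
          then have "cc K powr r * (\<Sum>j<N. q ^ j) \<le> cc K powr r * (1 / (1 - q))"
            by (rule mult_left_mono) simp
          then show ?thesis by (simp add: sum_distrib_left)
        qed
        then have "ennreal (\<Sum>j<N. cc K powr r * q ^ j) \<le> ennreal (cc K powr r / (1 - q))" by (rule ennreal_leI)
        finally show "sum g F \<le> ennreal (cc K powr r / (1 - q))" .
      qed
      also have "cc K powr r / (1 - q) \<le> (1 / (1 - q)) * l powr r"
      proof -
        have "cc K powr r \<le> l powr r" using K cc_pos[of K] r by (intro powr_mono2) auto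
        then show ?thesis using q by (simp add: divide_right_mono)
      qed
      then have "ennreal (cc K powr r / (1 - q)) \<le> ennreal ((1 / (1 - q)) * l powr r)" by (rule ennreal_leI)
      also have "\<dots> = ennreal (1 / (1 - q)) * epow L r"
        using l q by (simp add: epow_ennreal flip: ennreal_mult)
      finally show ?thesis unfolding g_def q_def .
    qed
  qed
qed


lemma mo_norm_zero_null:
  assumes P: "prob_space M" and MO: "musielak_orlicz M \<phi>" and B: "B \<in> sets M"
    and z: "mo_norm M \<phi> (indicator B) = 0"
  shows "emeasure M B = 0"
proof -
  interpret prob_space M by fact
  have Bs: "B \<subseteq> space M" using sets.sets_into_space[OF B] .
  have phim[measurable]: "(\<lambda>x. \<phi> x t) \<in> borel_measurable M" if "t \<ge> 0" for t
    using MO that unfolding musielak_orlicz_def by auto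
  have int1: "(\<integral>\<^sup>+ x. ennreal (\<phi> x t) * indicator B x \<partial>M) \<le> 1" if t: "t \<ge> 0" for t
  proof -
    have "mo_norm M \<phi> (indicator B) < ennreal (1 / (t + 1))" using z t by simp
    then obtain s where s: "s \<in> {ennreal l | l. l > 0 \<and> (\<integral>\<^sup>+ x. phi_ext \<phi> x (indicator B x / ennreal l) \<partial>M) \<le> 1}"
      "s < ennreal (1 / (t + 1))"
      unfolding mo_norm_def by (auto simp: Inf_less_iff)
    then obtain l where l: "s = ennreal l" "l > 0" "(\<integral>\<^sup>+ x. phi_ext \<phi> x (indicator B x / ennreal l) \<partial>M) \<le> 1"
      by auto
    have "l < 1 / (t + 1)" using s(2) l t by (simp add: ennreal_less_iff)
    then have tl: "t \<le> 1 / l" using l t by (simp add: field_simps)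
    have "(\<integral>\<^sup>+ x. ennreal (\<phi> x t) * indicator B x \<partial>M) \<le> (\<integral>\<^sup>+ x. phi_ext \<phi> x (indicator B x / ennreal l) \<partial>M)"
    proof (rule nn_integral_mono)
      fix x assume x: "x \<in> space M"
      show "ennreal (\<phi> x t) * indicator B x \<le> phi_ext \<phi> x (indicator B x / ennreal l)"
      proof (cases "x \<in> B")
        case True
        have mo: "mono_on {0..} (\<phi> x)" using MO x unfolding musielak_orlicz_def by auto
        have "\<phi> x t \<le> \<phi> x (1 / l)" using tl t l by (intro mono_onD[OF mo]) auto
        moreover have "indicator B x / ennreal l = ennreal (1 / l)" using True l by (simp add: divide_ennreal[symmetric])
        ultimately show ?thesis using True l by (simp add: phi_ext_def ennreal_leI)
      qed simp
    qed
    with l show ?thesis by simp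
  qed
  have le: "emeasure M B \<le> ennreal (1 / real N)" if N: "N > 0" for N :: nat
  proof -
    define A where "A m = {x \<in> space M. x \<in> B \<and> real N \<le> \<phi> x (real m)}" for m :: nat
    have Am[measurable]: "A m \<in> sets M" for m
    proof -
      have [measurable]: "(\<lambda>x. \<phi> x (real m)) \<in> borel_measurable M" by (rule phim) simp
      show ?thesis unfolding A_def using B by measurable
    qed
    have inc: "incseq A"
    proof (rule incseq_SucI)
      fix m
      show "A m \<subseteq> A (Suc m)"
      proof
        fix x assume "x \<in> A m"
        then have x: "x \<in> space M" "x \<in> B" "real N \<le> \<phi> x (real m)" unfolding A_def by auto
        have mo: "mono_on {0..} (\<phi> x)" using MO x unfolding musielak_orlicz_def by auto
        have "\<phi> x (real m) \<le> \<phi> x (real (Suc m))" by (intro mono_onD[OF mo]) auto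
        then show "x \<in> A (Suc m)" using x unfolding A_def by auto
      qed
    qed
    have un: "(\<Union>m. A m) = B"
    proof
      show "(\<Union>m. A m) \<subseteq> B" unfolding A_def by auto
      show "B \<subseteq> (\<Union>m. A m)"
      proof
        fix x assume xB: "x \<in> B"
        then have x: "x \<in> space M" using Bs by auto
        have "filterlim (\<phi> x) at_top at_top" using MO x unfolding musielak_orlicz_def by auto
        then have "eventually (\<lambda>y. real N \<le> \<phi> x y) at_top" by (simp add: filterlim_at_top)
        then obtain y0 where y0: "\<And>y. y \<ge> y0 \<Longrightarrow> real N \<le> \<phi> x y" by (auto simp: eventually_at_top_linorder)
        obtain m :: nat where "y0 \<le> real m" using real_arch_simple by blast
        then have "x \<in> A m" using y0 x xB unfolding A_def by auto
        then show "x \<in> (\<Union>m. A m)" by blast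
      qed
    qed
    have Ale: "emeasure M (A m) \<le> ennreal (1 / real N)" for m
    proof -
      have "ennreal (real N) * emeasure M (A m) = (\<integral>\<^sup>+ x. ennreal (real N) * indicator (A m) x \<partial>M)"
        by (simp add: nn_integral_cmult_indicator)
      also have "\<dots> \<le> (\<integral>\<^sup>+ x. ennreal (\<phi> x (real m)) * indicator B x \<partial>M)"
        by (rule nn_integral_mono) (auto simp: A_def indicator_def intro: ennreal_leI)
      also have "\<dots> \<le> 1" by (rule int1) simp
      finally have "ennreal (real N) * emeasure M (A m) \<le> 1" .
      then have "ennreal (1 / real N) * (ennreal (real N) * emeasure M (A m)) \<le> ennreal (1 / real N) * 1"
        by (rule mult_left_mono) simp
      then show ?thesis using N by (simp flip: mult.assoc ennreal_mult)
    qed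
    have "emeasure M B = (SUP m. emeasure M (A m))"
      unfolding un[symmetric] by (rule SUP_emeasure_incseq[symmetric]) (use inc in auto)
    also have "\<dots> \<le> ennreal (1 / real N)" by (rule SUP_least) (rule Ale)
    finally show ?thesis .
  qed
  show ?thesis
  proof (rule ccontr)
    assume ne: "emeasure M B \<noteq> 0"
    have "measure M B > 0" using ne B by (simp add: emeasure_eq_measure zero_less_measure_iff)
    then obtain n where n: "inverse (real (Suc n)) < measure M B" using reals_Archimedean by blast
    have "emeasure M B \<le> ennreal (1 / real (Suc n))" by (rule le) simp
    then have "measure M B \<le> 1 / real (Suc n)" using B by (simp add: emeasure_eq_measure)
    then show False using n by (simp add: inverse_eq_divide)
  qed
qed


lemma P_to_H:
  fixes T :: "('a \<Rightarrow> real) \<Rightarrow> 'a \<Rightarrow> ennreal"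
  assumes P: "prob_space M" and Fi: "is_filtration M F" and MO: "musielak_orlicz M \<phi>"
    and f: "f \<in> martingales M F" and lam: "lam \<in> Lambda M F" and r: "0 < r" "r \<le> 1"
    and fin: "mo_norm M \<phi> (lam_inf lam) < \<top>"
    and zero: "AE x in M. \<forall>i\<ge>1. lam (i - 1) x = 0 \<longrightarrow> f i x = f (i - 1) x"
    and gen: "\<And>k. \<exists>G. integrable M G \<and> (\<forall>n. AE x in M. condE M F n G x = Dk lam f k n x)
        \<and> (\<forall>c>0. AE x in M. T (\<lambda>x. G x / c) x \<le> ennreal (3 * cc k / c))"
  shows "Hat_norm M F \<phi> T r f \<le> ennreal (3 * (1 / (1 - 2 powr (- r))) powr (1 / r)) * mo_norm M \<phi> (lam_inf lam)"
proof -
  interpret prob_space M by fact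
  have cM[measurable]: "condE M F n h \<in> borel_measurable M" for n h using condE_meas(2)[OF P Fi] .
  from gen have "\<forall>k. \<exists>G. integrable M G \<and> (\<forall>n. AE x in M. condE M F n G x = Dk lam f k n x)
        \<and> (\<forall>c>0. AE x in M. T (\<lambda>x. G x / c) x \<le> ennreal (3 * cc k / c))" by blast
  then obtain G where G: "\<And>k. integrable M (G k)" "\<And>k n. AE x in M. condE M F n (G k) x = Dk lam f k n x"
    "\<And>k c. c > 0 \<Longrightarrow> AE x in M. T (\<lambda>x. G k x / c) x \<le> ennreal (3 * cc k / c)"
    by metis
  have G2: "AE x in M. condE M F n (G k) x = Dk lam f k n x" for k n using G(2) by blast
  have G3: "c > 0 \<Longrightarrow> AE x in M. T (\<lambda>x. G k x / c) x \<le> ennreal (3 * cc k / c)" for k c using G(3) by blast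
  define Bk where "Bk k = B_set M (nuk lam k)" for k
  have Bks[measurable]: "Bk k \<in> sets M" for k unfolding Bk_def by (rule nuk_B_sets[OF Fi lam])
  have Bk_iff: "x \<in> Bk k \<longleftrightarrow> x \<in> space M \<and> ennreal (cc k) < lam_inf lam x" for k x
    unfolding Bk_def nuk_B[OF lam] by simp
  define N where "N k = mo_norm M \<phi> (indicator (Bk k))" for k
  have Nfin: "N k < \<top>" for k
  proof -
    have ind: "indicator (Bk k) x \<le> ennreal (1 / cc k) * lam_inf lam x" for x
    proof (cases "x \<in> Bk k")
      case True
      then have "ennreal (cc k) \<le> lam_inf lam x" using Bk_iff by auto
      then have "ennreal (1 / cc k) * ennreal (cc k) \<le> ennreal (1 / cc k) * lam_inf lam x"
        by (rule mult_left_mono) simp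
      moreover have "ennreal (1 / cc k) * ennreal (cc k) = 1"
        using cc_pos[of k] by (simp flip: ennreal_mult)
      ultimately show ?thesis using True by simp
    qed simp
    have "N k \<le> mo_norm M \<phi> (\<lambda>x. ennreal (1 / cc k) * lam_inf lam x)"
      unfolding N_def by (rule mo_norm_mono_AE[OF MO]) (use ind in auto)
    also have "\<dots> = ennreal (1 / cc k) * mo_norm M \<phi> (lam_inf lam)"
      by (rule mo_norm_scale) (simp add: cc_pos)
    also have "\<dots> < \<top>" using fin by (simp add: ennreal_mult_less_top)
    finally show ?thesis .
  qed
  define Nr where "Nr k = enn2real (N k)" for k
  have N_eq: "N k = ennreal (Nr k)" for k unfolding Nr_def using Nfin[of k] by (simp add: less_top)
  have Nr_nn: "Nr k \<ge> 0" for k unfolding Nr_def by simp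
  define \<mu> where "\<mu> k = 3 * cc k * Nr k" for k
  have \<mu>_nn: "\<mu> k \<ge> 0" for k unfolding \<mu>_def using cc_pos[of k] Nr_nn[of k] by simp
  have \<mu>_pos: "\<mu> k > 0 \<longleftrightarrow> Nr k > 0" for k unfolding \<mu>_def using cc_pos[of k] Nr_nn[of k]
    by (simp add: zero_less_mult_iff)
  define \<mu>' where "\<mu>' k = (if \<mu> k > 0 then \<mu> k else 1)" for k
  have \<mu>'_pos: "\<mu>' k > 0" for k unfolding \<mu>'_def by simp
  define a where "a k x = G k x / \<mu>' k" for k x
  have a_int: "integrable M (a k)" for k unfolding a_def using G(1) by simp
  have ca: "AE x in M. condE M F n (a k) x = Dk lam f k n x / \<mu>' k" for k n
    using condE_cdiv[OF P Fi G(1)[of k], where n=n and c="\<mu>' k"] G2[of n k] unfolding a_def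
    by eventually_elim simp
  have null: "AE x in M. x \<notin> Bk k" if "Nr k = 0" for k
  proof -
    have "N k = 0" using N_eq[of k] that by simp
    then have "emeasure M (Bk k) = 0" unfolding N_def by (intro mo_norm_zero_null[OF P MO]) auto
    then show ?thesis by (intro AE_not_in) (simp add: null_sets_def)
  qed
  have atom: "is_atom M F \<phi> T (a k) (nuk lam k)" for k
    unfolding is_atom_def
  proof (intro conjI allI)
    show "integrable M (a k)" by (rule a_int)
    show "is_stopping_time M F (nuk lam k)" by (rule nuk_stopping[OF Fi lam])
  next
    fix n :: nat
    show "AE x in M. enat n \<le> nuk lam k x \<longrightarrow> condE M F n (a k) x = 0"
      using ca[of n k] AE_space
    proof eventually_elim
      case (elim x)
      then show ?case using Dk_zero[OF lam, of x n k f] by auto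
    qed
  next
    show "AE x in M. x \<in> B_set M (nuk lam k) \<longrightarrow> T (a k) x \<le> inverse (mo_norm M \<phi> (indicator (B_set M (nuk lam k))))"
    proof (cases "Nr k > 0")
      case False
      then have "N k = 0" using N_eq[of k] Nr_nn[of k] by simp
      then show ?thesis unfolding N_def Bk_def by simp
    next
      case True
      then have m: "\<mu>' k = \<mu> k" "\<mu> k > 0" unfolding \<mu>'_def using \<mu>_pos by auto
      have "3 * cc k / \<mu> k = inverse (Nr k)" unfolding \<mu>_def using cc_pos[of k] True by (simp add: field_simps)
      then have "ennreal (3 * cc k / \<mu> k) = inverse (N k)" using True N_eq[of k] by (simp add: inverse_ennreal)
      then show ?thesis using G3[of "\<mu> k" k, OF m(2)] unfolding a_def m(1) N_def Bk_def
        by (auto elim: eventually_mono)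
    qed
  qed
  have decomp: "atomic_decomp M F \<phi> T f \<mu> a (nuk lam)"
    unfolding atomic_decomp_def
  proof (intro conjI allI)
    fix k show "0 \<le> \<mu> k" by (rule \<mu>_nn)
    show "is_atom M F \<phi> T (a k) (nuk lam k)" by (rule atom)
  next
    fix n
    have each: "AE x in M. \<mu> k * condE M F n (a k) x = Dk lam f k n x" for k
    proof (cases "\<mu> k > 0")
      case True
      then have e: "\<mu>' k = \<mu> k" unfolding \<mu>'_def by simp
      show ?thesis using ca[of n k] by eventually_elim (use True e in simp)
    next
      case False
      then have z: "Nr k = 0" "\<mu> k = 0" using \<mu>_pos[of k] Nr_nn[of k] \<mu>_nn[of k] by auto
      show ?thesis using null[OF z(1)] AE_space
      proof (eventually_elim)
        case (elim x) then show ?case using Dk_out[OF lam, of x k f n] z(2) unfolding Bk_def by simp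
      qed
    qed
    have all: "AE x in M. \<forall>k. \<mu> k * condE M F n (a k) x = Dk lam f k n x"
      using each by (subst AE_all_countable) auto
    show "AE x in M. ((\<lambda>k. \<mu> k * condE M F n (a k) x) has_sum f n x) UNIV"
      using all zero mart_props(1)[OF f] AE_space
    proof eventually_elim
      case (elim x)
      have "((\<lambda>k. Dk lam f k n x) has_sum f n x) UNIV"
        by (rule Dk_has_sum[OF lam]) (use elim in auto)
      moreover have "(\<lambda>k. \<mu> k * condE M F n (a k) x) = (\<lambda>k. Dk lam f k n x)" using elim by auto
      ultimately show ?case by simp
    qed
  qed
  have Hle: "Hat_norm M F \<phi> T r f \<le> atomic_size M \<phi> r \<mu> (nuk lam)"
    unfolding Hat_norm_def by (rule Inf_lower) (use decomp in blast)
  define Cq where "Cq = 1 / (1 - 2 powr (- r))"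
  have Cq: "Cq > 0"
  proof -
    have "(2::real) powr (- r) < 2 powr 0" using r by (subst powr_less_cancel_iff) auto
    then show ?thesis unfolding Cq_def by simp
  qed
  define C where "C = 3 * Cq powr (1 / r)"
  have Cpos: "C > 0" unfolding C_def using Cq by simp
  have term_le: "ennreal (\<mu> k) * indicator (B_set M (nuk lam k)) x * inverse (mo_norm M \<phi> (indicator (B_set M (nuk lam k))))
      \<le> ennreal (3 * cc k) * (if ennreal (cc k) < lam_inf lam x then 1 else 0)" for k x
  proof (cases "x \<in> Bk k")
    case False then show ?thesis unfolding Bk_def by simp
  next
    case True
    then have c: "ennreal (cc k) < lam_inf lam x" using Bk_iff by auto
    show ?thesis
    proof (cases "Nr k > 0")
      case False
      then have "\<mu> k = 0" using \<mu>_pos[of k] \<mu>_nn[of k] by auto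
      then show ?thesis by simp
    next
      case Np: True
      have "ennreal (\<mu> k) * inverse (ennreal (Nr k)) = ennreal (\<mu> k * inverse (Nr k))"
        using Np \<mu>_nn[of k] by (simp add: inverse_ennreal ennreal_mult)
      also have "\<mu> k * inverse (Nr k) = 3 * cc k" unfolding \<mu>_def using Np by simp
      finally show ?thesis using True c N_eq[of k] unfolding Bk_def N_def by simp
    qed
  qed
  have pt: "epow (\<Sum>\<^sub>\<infinity>k. epow (ennreal (\<mu> k) * indicator (B_set M (nuk lam k)) x * inverse (mo_norm M \<phi> (indicator (B_set M (nuk lam k))))) r) (1 / r)
      \<le> ennreal C * lam_inf lam x" for x
  proof -
    let ?g = "\<lambda>k::int. ennreal (cc k powr r) * (if ennreal (cc k) < lam_inf lam x then 1 else 0)"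
    have "(\<Sum>\<^sub>\<infinity>k. epow (ennreal (\<mu> k) * indicator (B_set M (nuk lam k)) x * inverse (mo_norm M \<phi> (indicator (B_set M (nuk lam k))))) r)
        \<le> (\<Sum>\<^sub>\<infinity>k. ennreal (3 powr r) * ?g k)"
    proof (rule infsum_ennreal_mono)
      fix k
      have "epow (ennreal (\<mu> k) * indicator (B_set M (nuk lam k)) x * inverse (mo_norm M \<phi> (indicator (B_set M (nuk lam k))))) r
          \<le> epow (ennreal (3 * cc k) * (if ennreal (cc k) < lam_inf lam x then 1 else 0)) r"
        by (rule epow_mono[OF term_le]) (use r in simp)
      also have "\<dots> = ennreal (3 powr r) * ?g k"
      proof (cases "ennreal (cc k) < lam_inf lam x")
        case True
        have "epow (ennreal (3 * cc k)) r = ennreal ((3 * cc k) powr r)"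
          using cc_pos[of k] by (intro epow_ennreal) simp
        also have "\<dots> = ennreal (3 powr r) * ennreal (cc k powr r)"
          using cc_pos[of k] by (simp add: powr_mult ennreal_mult)
        finally show ?thesis using True by simp
      qed simp
      finally show "epow (ennreal (\<mu> k) * indicator (B_set M (nuk lam k)) x * inverse (mo_norm M \<phi> (indicator (B_set M (nuk lam k))))) r
          \<le> ennreal (3 powr r) * ?g k" .
    qed
    also have "\<dots> \<le> ennreal (3 powr r) * (\<Sum>\<^sub>\<infinity>k. ?g k)" by (rule infsum_ennreal_cmult_le)
    also have "\<dots> \<le> ennreal (3 powr r) * (ennreal Cq * epow (lam_inf lam x) r)"
      by (rule mult_left_mono) (use geo_int[OF r(1), of "lam_inf lam x"] in \<open>simp_all add: Cq_def\<close>)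
    also have "\<dots> = ennreal (3 powr r * Cq) * epow (lam_inf lam x) r"
      using Cq by (simp add: ennreal_mult mult.assoc)
    finally have s: "(\<Sum>\<^sub>\<infinity>k. epow (ennreal (\<mu> k) * indicator (B_set M (nuk lam k)) x * inverse (mo_norm M \<phi> (indicator (B_set M (nuk lam k))))) r)
        \<le> ennreal (3 powr r * Cq) * epow (lam_inf lam x) r" .
    have "epow (\<Sum>\<^sub>\<infinity>k. epow (ennreal (\<mu> k) * indicator (B_set M (nuk lam k)) x * inverse (mo_norm M \<phi> (indicator (B_set M (nuk lam k))))) r) (1 / r)
        \<le> epow (ennreal (3 powr r * Cq) * epow (lam_inf lam x) r) (1 / r)"
      by (rule epow_mono[OF s]) (use r in simp)
    also have "\<dots> = ennreal ((3 powr r * Cq) powr (1 / r)) * epow (epow (lam_inf lam x) r) (1 / r)"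
      by (rule epow_mult) (use Cq r in auto)
    also have "epow (epow (lam_inf lam x) r) (1 / r) = lam_inf lam x"
      using r by (simp add: epow_epow)
    also have "(3 powr r * Cq) powr (1 / r) = C"
      unfolding C_def using Cq r by (simp add: powr_mult powr_powr)
    finally show ?thesis .
  qed
  have "atomic_size M \<phi> r \<mu> (nuk lam) \<le> mo_norm M \<phi> (\<lambda>x. ennreal C * lam_inf lam x)"
    unfolding atomic_size_def by (rule mo_norm_mono_AE[OF MO]) (use pt in auto)
  also have "\<dots> = ennreal C * mo_norm M \<phi> (lam_inf lam)" by (rule mo_norm_scale[OF Cpos])
  finally show ?thesis using Hle unfolding C_def Cq_def by simp
qed


lemma Qbound:
  fixes e l :: "nat \<Rightarrow> real"
  assumes mono: "\<And>m n. m \<le> n \<Longrightarrow> l m \<le> l n"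
    and hyp: "\<And>n. n \<ge> 1 \<Longrightarrow> l (n - 1) \<le> c \<Longrightarrow> \<bar>\<Sum>i\<in>{1..n}. e i\<bar> \<le> b"
    and b: "b \<ge> 0"
  shows "\<bar>\<Sum>i\<in>{1..n}. (if l (i - 1) \<le> c then e i else 0)\<bar> \<le> b"
proof (induction n)
  case 0 then show ?case using b by simp
next
  case (Suc n)
  show ?case
  proof (cases "l n \<le> c")
    case True
    have "(\<Sum>i\<in>{1..Suc n}. (if l (i - 1) \<le> c then e i else 0)) = (\<Sum>i\<in>{1..Suc n}. e i)"
    proof (rule sum.cong)
      fix i assume "i \<in> {1..Suc n}"
      then have "l (i - 1) \<le> l n" by (intro mono) auto
      then show "(if l (i - 1) \<le> c then e i else 0) = e i" using True by auto
    qed simp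
    then show ?thesis using hyp[of "Suc n"] True by simp
  next
    case False
    then show ?thesis using Suc.IH by simp
  qed
qed

lemma Dk_diff:
  "Dk lam f k n x = (\<Sum>i\<in>{1..n}. (if lam (i - 1) x \<le> cc (k + 1) then f i x - f (i - 1) x else 0))
      - (\<Sum>i\<in>{1..n}. (if lam (i - 1) x \<le> cc k then f i x - f (i - 1) x else 0))"
proof -
  have "cc k < cc (k + 1)" by (rule cc_strict) simp
  then have "incr lam f k i x = (if lam (i - 1) x \<le> cc (k + 1) then f i x - f (i - 1) x else 0)
      - (if lam (i - 1) x \<le> cc k then f i x - f (i - 1) x else 0)" for i
    unfolding incr_def by auto
  then show ?thesis unfolding Dk_def by (simp add: sum_subtractf)
qed

lemma Dk_bound_M:
  assumes lam: "lam \<in> Lambda M F" and x: "x \<in> space M" and f0: "f 0 x = 0"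
    and adm: "\<And>n. n \<ge> 1 \<Longrightarrow> \<bar>f n x\<bar> \<le> lam (n - 1) x"
  shows "\<bar>Dk lam f k n x\<bar> \<le> 3 * cc k"
proof -
  have Q: "\<bar>\<Sum>i\<in>{1..n}. (if lam (i - 1) x \<le> c then f i x - f (i - 1) x else 0)\<bar> \<le> c" if c: "c \<ge> 0" for c
  proof (rule Qbound[where l="\<lambda>m. lam m x"])
    show "lam m x \<le> lam n x" if "m \<le> n" for m n using Lambda_mono[OF lam x that] .
    fix n :: nat assume n: "n \<ge> 1" "lam (n - 1) x \<le> c"
    have "\<bar>\<Sum>i\<in>{1..n}. f i x - f (i - 1) x\<bar> = \<bar>f n x\<bar>" using sum_diff_tel[of f x n] f0 by simp
    also have "\<dots> \<le> c" using adm[OF n(1)] n(2) by linarith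
    finally show "\<bar>\<Sum>i\<in>{1..n}. f i x - f (i - 1) x\<bar> \<le> c" .
  qed (rule c)
  have "\<bar>Dk lam f k n x\<bar> \<le> cc (k + 1) + cc k"
    unfolding Dk_diff using Q[of "cc (k + 1)"] Q[of "cc k"] cc_pos[of k] cc_pos[of "k + 1"]
    by (smt (verit))
  also have "\<dots> = 3 * cc k" by (simp add: cc_Suc)
  finally show ?thesis .
qed

lemma Dk_sq_bound_S:
  assumes lam: "lam \<in> Lambda M F" and x: "x \<in> space M"
    and adm: "\<And>n. n \<ge> 1 \<Longrightarrow> sqfun_n f n x \<le> lam (n - 1) x"
  shows "(\<Sum>i\<in>{1..n}. (incr lam f k i x)\<^sup>2) \<le> (cc (k + 1))\<^sup>2"
proof -
  let ?c = "cc (k + 1)"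
  have c0: "?c \<ge> 0" using cc_pos[of "k+1"] by simp
  have Q: "\<bar>\<Sum>i\<in>{1..n}. (if lam (i - 1) x \<le> ?c then (f i x - f (i - 1) x)\<^sup>2 else 0)\<bar> \<le> ?c\<^sup>2"
  proof (rule Qbound[where l="\<lambda>m. lam m x"])
    show "lam m x \<le> lam n x" if "m \<le> n" for m n using Lambda_mono[OF lam x that] .
    fix n :: nat assume n: "n \<ge> 1" "lam (n - 1) x \<le> ?c"
    have s: "sqfun_n f n x \<le> ?c" using adm[OF n(1)] n(2) by linarith
    have nn: "0 \<le> (\<Sum>i\<in>{1..n}. (f i x - f (i - 1) x)\<^sup>2)" by (intro sum_nonneg) simp
    have "(\<Sum>i\<in>{1..n}. (f i x - f (i - 1) x)\<^sup>2) = (sqfun_n f n x)\<^sup>2"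
      unfolding sqfun_n_def using nn by simp
    also have "\<dots> \<le> ?c\<^sup>2" using s by (intro power_mono) (auto simp: sqfun_n_def intro: sum_nonneg)
    finally show "\<bar>\<Sum>i\<in>{1..n}. (f i x - f (i - 1) x)\<^sup>2\<bar> \<le> ?c\<^sup>2" using nn by simp
  qed simp
  have "(\<Sum>i\<in>{1..n}. (incr lam f k i x)\<^sup>2) \<le> (\<Sum>i\<in>{1..n}. (if lam (i - 1) x \<le> ?c then (f i x - f (i - 1) x)\<^sup>2 else 0))"
    by (intro sum_mono) (auto simp: incr_def)
  also have "\<dots> \<le> ?c\<^sup>2" using Q by simp
  finally show ?thesis .
qed

lemma incr_bound_S:
  assumes lam: "lam \<in> Lambda M F" and x: "x \<in> space M"
    and adm: "\<And>n. n \<ge> 1 \<Longrightarrow> sqfun_n f n x \<le> lam (n - 1) x"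
  shows "\<bar>incr lam f k i x\<bar> \<le> cc (k + 1)"
proof (cases "i \<ge> 1")
  case True
  have "(incr lam f k i x)\<^sup>2 \<le> (\<Sum>j\<in>{1..i}. (incr lam f k j x)\<^sup>2)"
    using True by (intro member_le_sum) auto
  also have "\<dots> \<le> (cc (k + 1))\<^sup>2" by (rule Dk_sq_bound_S[OF lam x adm])
  finally have "(incr lam f k i x)\<^sup>2 \<le> (cc (k + 1))\<^sup>2" .
  then have "\<bar>incr lam f k i x\<bar> \<le> \<bar>cc (k + 1)\<bar>" by (simp add: abs_le_square_iff)
  then show ?thesis using cc_pos[of "k+1"] by simp
next
  case False
  then have "i = 0" by simp
  then show ?thesis using cc_pos[of "k+1"] by (simp add: incr_def)
qed

lemma Dk_bound_S:
  assumes lam: "lam \<in> Lambda M F" and x: "x \<in> space M"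
    and adm: "\<And>n. n \<ge> 1 \<Longrightarrow> sqfun_n f n x \<le> lam (n - 1) x"
  shows "\<bar>Dk lam f k n x\<bar> \<le> real n * cc (k + 1)"
proof -
  have "\<bar>Dk lam f k n x\<bar> \<le> (\<Sum>i\<in>{1..n}. \<bar>incr lam f k i x\<bar>)" unfolding Dk_def by (rule sum_abs)
  also have "\<dots> \<le> (\<Sum>i\<in>{1..n}. cc (k + 1))" by (intro sum_mono incr_bound_S[OF lam x adm])
  also have "\<dots> = real n * cc (k + 1)" by simp
  finally show ?thesis .
qed


lemma mart_V:
  assumes P: "prob_space M" and Fi: "is_filtration M F"
    and meas: "\<And>n. g n \<in> borel_measurable (F n)"
    and bnd: "\<And>n. \<exists>B. AE x in M. \<bar>g n x\<bar> \<le> B"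
    and step: "\<And>n. AE x in M. condE M F n (g (Suc n)) x = g n x"
  shows "(\<integral>x. (g (Suc n) x)\<^sup>2 \<partial>M) = (\<integral>x. (g n x)\<^sup>2 \<partial>M) + (\<integral>x. (g (Suc n) x - g n x)\<^sup>2 \<partial>M)"
proof -
  interpret prob_space M by fact
  have cM[measurable]: "condE M F n h \<in> borel_measurable M" for n h using condE_meas(2)[OF P Fi] .
  have gM[measurable]: "g n \<in> borel_measurable M" for n using filt_meas_M[OF Fi meas] .
  obtain B where B: "\<And>n. AE x in M. \<bar>g n x\<bar> \<le> B n" using bnd by metis
  have int: "integrable M (g n)" for n
    using B[of n] by (intro integrable_const_bound[of _ "B n"]) auto
  have int2: "integrable M (\<lambda>x. g n x * g m x)" for n m
  proof (rule integrable_const_bound[of _ "B n * B m"])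
    show "AE x in M. norm (g n x * g m x) \<le> B n * B m"
      using B[of n] B[of m] by eventually_elim (auto simp: abs_mult intro: mult_mono)
  qed auto
  have int2': "integrable M (\<lambda>x. (g n x)\<^sup>2)" for n using int2[of n n] by (simp add: power2_eq_square)
  have tower: "AE x in M. condE M F n (g (Suc n)) x = g n x" by (rule step)
  have orth: "(\<integral>x. g n x * g (Suc n) x \<partial>M) = (\<integral>x. (g n x)\<^sup>2 \<partial>M)"
  proof -
    have "(\<integral>x. g n x * g (Suc n) x \<partial>M) = (\<integral>x. g n x * condE M F n (g (Suc n)) x \<partial>M)"
      by (rule condE_intg[OF P Fi int2 meas gM, symmetric])
    also have "\<dots> = (\<integral>x. (g n x)\<^sup>2 \<partial>M)"
      by (rule integral_cong_AE) (use tower in \<open>auto simp: power2_eq_square elim: eventually_mono\<close>)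
    finally show ?thesis .
  qed
  have "(\<integral>x. (g (Suc n) x - g n x)\<^sup>2 \<partial>M) = (\<integral>x. (g (Suc n) x)\<^sup>2 - 2 * (g n x * g (Suc n) x) + (g n x)\<^sup>2 \<partial>M)"
    by (rule arg_cong[where f="integral\<^sup>L M"]) (auto simp: fun_eq_iff power2_eq_square algebra_simps)
  also have "\<dots> = (\<integral>x. (g (Suc n) x)\<^sup>2 \<partial>M) - 2 * (\<integral>x. g n x * g (Suc n) x \<partial>M) + (\<integral>x. (g n x)\<^sup>2 \<partial>M)"
    using int2 int2' by (simp add: integral_add integral_diff)
  also have "\<dots> = (\<integral>x. (g (Suc n) x)\<^sup>2 \<partial>M) - (\<integral>x. (g n x)\<^sup>2 \<partial>M)" using orth by simp
  finally show ?thesis by simp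
qed

lemma sum_lessThan_Suc_shift: "(\<Sum>i<n. h (Suc i)) = (\<Sum>i\<in>{1..n}. h i :: 'b::comm_monoid_add)"
  by (induction n) (auto simp: add.commute)

lemma sq_le_of_abs: fixes a b :: real assumes "\<bar>a\<bar> \<le> b" shows "a\<^sup>2 \<le> b\<^sup>2"
proof -
  have "\<bar>a\<bar> \<le> \<bar>b\<bar>" using assms by linarith
  then show ?thesis by (simp add: abs_le_square_iff)
qed

lemma gen_M:
  assumes P: "prob_space M" and Fi: "is_filtration M F" and f: "f \<in> martingales M F" and lam: "lam \<in> Lambda M F"
    and adm: "\<And>n. n \<ge> 1 \<Longrightarrow> AE x in M. \<bar>f n x\<bar> \<le> lam (n - 1) x"
  shows "\<exists>G. integrable M G \<and> (\<forall>n. AE x in M. condE M F n G x = Dk lam f k n x)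
        \<and> (\<forall>c>0. AE x in M. M_atom M F (\<lambda>x. G x / c) x \<le> ennreal (3 * cc k / c))"
proof -
  interpret prob_space M by fact
  have cM[measurable]: "condE M F n h \<in> borel_measurable M" for n h using condE_meas(2)[OF P Fi] .
  have adm': "AE x in M. \<forall>n. n \<ge> 1 \<longrightarrow> \<bar>f n x\<bar> \<le> lam (n - 1) x"
    using adm by (subst AE_all_countable) auto
  have bound: "AE x in M. \<forall>n. \<bar>Dk lam f k n x\<bar> \<le> 3 * cc k"
    using adm' mart_props(1)[OF f] AE_space
  proof eventually_elim
    case (elim x)
    show ?case
    proof
      fix n show "\<bar>Dk lam f k n x\<bar> \<le> 3 * cc k"
        by (rule Dk_bound_M[OF lam]) (use elim in blast)+
    qed
  qed
  have DM[measurable]: "Dk lam f k n \<in> borel_measurable M" for n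
    using filt_meas_M[OF Fi Dk_meas[OF Fi lam f]] .
  obtain G where G: "integrable M G" "\<And>n. AE x in M. condE M F n G x = Dk lam f k n x"
  proof -
    have "\<exists>G. integrable M G \<and> (\<forall>n. AE x in M. condE M F n G x = Dk lam f k n x)"
    proof (rule closure_L2[OF P Fi Dk_meas[OF Fi lam f] _ Dk_step[OF P Fi lam f]])
      fix n show "\<exists>B. AE x in M. \<bar>Dk lam f k n x\<bar> \<le> B"
        using bound by (intro exI[of _ "3 * cc k"]) (auto elim: eventually_mono)
    next
      fix n
      have i2: "integrable M (\<lambda>x. (Dk lam f k n x)\<^sup>2)"
      proof (rule integrable_const_bound[of _ "(3 * cc k)\<^sup>2"])
        show "AE x in M. norm ((Dk lam f k n x)\<^sup>2) \<le> (3 * cc k)\<^sup>2"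
          using bound
        proof eventually_elim
          case (elim x)
          have "(Dk lam f k n x)\<^sup>2 \<le> (3 * cc k)\<^sup>2" using elim by (intro sq_le_of_abs) blast
          then show ?case by simp
        qed
      qed auto
      have "(\<integral>x. (Dk lam f k n x)\<^sup>2 \<partial>M) \<le> (\<integral>x. (3 * cc k)\<^sup>2 \<partial>M)"
      proof (rule integral_mono_AE[OF i2])
        show "AE x in M. (Dk lam f k n x)\<^sup>2 \<le> (3 * cc k)\<^sup>2"
          using bound by eventually_elim (intro sq_le_of_abs, blast)
      qed simp
      then show "(\<integral>x. (Dk lam f k n x)\<^sup>2 \<partial>M) \<le> (3 * cc k)\<^sup>2" by (simp add: prob_space)
    qed
    then show thesis using that by blast
  qed
  have "AE x in M. M_atom M F (\<lambda>x. G x / c) x \<le> ennreal (3 * cc k / c)" if c: "c > 0" for c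
  proof -
    have all: "AE x in M. \<forall>n. condE M F n (\<lambda>x. G x / c) x = Dk lam f k n x / c"
    proof (subst AE_all_countable, intro allI)
      fix n show "AE x in M. condE M F n (\<lambda>x. G x / c) x = Dk lam f k n x / c"
        using condE_cdiv[OF P Fi G(1), where n=n and c=c] G(2)[of n] by eventually_elim simp
    qed
    show ?thesis using all bound
    proof eventually_elim
      case (elim x)
      show ?case unfolding M_atom_def
      proof (rule SUP_least)
        fix n
        have "\<bar>Dk lam f k n x / c\<bar> \<le> 3 * cc k / c" using elim c by (simp add: divide_right_mono)
        then show "ennreal \<bar>condE M F n (\<lambda>x. G x / c) x\<bar> \<le> ennreal (3 * cc k / c)"
          using elim by (simp add: ennreal_leI)
      qed
    qed
  qed
  then show ?thesis using G by blast
qed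


lemma gen_S:
  assumes P: "prob_space M" and Fi: "is_filtration M F" and f: "f \<in> martingales M F" and lam: "lam \<in> Lambda M F"
    and adm: "\<And>n. n \<ge> 1 \<Longrightarrow> AE x in M. sqfun_n f n x \<le> lam (n - 1) x"
  shows "\<exists>G. integrable M G \<and> (\<forall>n. AE x in M. condE M F n G x = Dk lam f k n x)
        \<and> (\<forall>c>0. AE x in M. S_atom M F (\<lambda>x. G x / c) x \<le> ennreal (3 * cc k / c))"
proof -
  interpret prob_space M by fact
  have cM[measurable]: "condE M F n h \<in> borel_measurable M" for n h using condE_meas(2)[OF P Fi] .
  let ?c = "cc (k + 1)"
  have adm': "AE x in M. \<forall>n. n \<ge> 1 \<longrightarrow> sqfun_n f n x \<le> lam (n - 1) x"
    using adm by (subst AE_all_countable) auto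
  have bound: "AE x in M. (\<forall>n. (\<Sum>i\<in>{1..n}. (incr lam f k i x)\<^sup>2) \<le> ?c\<^sup>2) \<and> (\<forall>n. \<bar>Dk lam f k n x\<bar> \<le> real n * ?c)
      \<and> (\<forall>i. \<bar>incr lam f k i x\<bar> \<le> ?c)"
    using adm' AE_space
  proof eventually_elim
    case (elim x)
    have a: "\<And>n. n \<ge> 1 \<Longrightarrow> sqfun_n f n x \<le> lam (n - 1) x" using elim by blast
    show ?case using Dk_sq_bound_S[OF lam _ a] Dk_bound_S[OF lam _ a] incr_bound_S[OF lam _ a] elim by blast
  qed
  have DM[measurable]: "Dk lam f k n \<in> borel_measurable M" for n
    using filt_meas_M[OF Fi Dk_meas[OF Fi lam f]] .
  have IM[measurable]: "incr lam f k n \<in> borel_measurable M" for n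
    using filt_meas_M[OF Fi incr_meas[OF Fi lam f]] .
  have bnd: "\<exists>B. AE x in M. \<bar>Dk lam f k n x\<bar> \<le> B" for n
    using bound by (intro exI[of _ "real n * ?c"]) (auto elim: eventually_mono)
  have i2: "integrable M (\<lambda>x. (incr lam f k i x)\<^sup>2)" for i
  proof (rule integrable_const_bound[of _ "?c\<^sup>2"])
    show "AE x in M. norm ((incr lam f k i x)\<^sup>2) \<le> ?c\<^sup>2"
      using bound by eventually_elim (simp, intro sq_le_of_abs, blast)
  qed auto
  have V: "(\<integral>x. (Dk lam f k n x)\<^sup>2 \<partial>M) = (\<Sum>i\<in>{1..n}. \<integral>x. (incr lam f k i x)\<^sup>2 \<partial>M)" for n
  proof (induction n)
    case 0 then show ?case by (simp add: Dk_def)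
  next
    case (Suc n)
    have "(\<integral>x. (Dk lam f k (Suc n) x)\<^sup>2 \<partial>M) = (\<integral>x. (Dk lam f k n x)\<^sup>2 \<partial>M) + (\<integral>x. (Dk lam f k (Suc n) x - Dk lam f k n x)\<^sup>2 \<partial>M)"
      by (rule mart_V[OF P Fi Dk_meas[OF Fi lam f] bnd Dk_step[OF P Fi lam f]])
    then show ?case using Suc by (simp add: Dk_Suc)
  qed
  obtain G where G: "integrable M G" "\<And>n. AE x in M. condE M F n G x = Dk lam f k n x"
  proof -
    have "\<exists>G. integrable M G \<and> (\<forall>n. AE x in M. condE M F n G x = Dk lam f k n x)"
    proof (rule closure_L2[OF P Fi Dk_meas[OF Fi lam f] bnd Dk_step[OF P Fi lam f]])
      fix n
      have "(\<integral>x. (Dk lam f k n x)\<^sup>2 \<partial>M) = (\<integral>x. (\<Sum>i\<in>{1..n}. (incr lam f k i x)\<^sup>2) \<partial>M)"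
        unfolding V by (rule Bochner_Integration.integral_sum[symmetric]) (rule i2)
      also have "\<dots> \<le> (\<integral>x. ?c\<^sup>2 \<partial>M)"
      proof (rule integral_mono_AE)
        show "integrable M (\<lambda>x. \<Sum>i\<in>{1..n}. (incr lam f k i x)\<^sup>2)"
          by (rule Bochner_Integration.integrable_sum) (rule i2)
        show "AE x in M. (\<Sum>i\<in>{1..n}. (incr lam f k i x)\<^sup>2) \<le> ?c\<^sup>2"
          using bound by eventually_elim blast
      qed simp
      finally show "(\<integral>x. (Dk lam f k n x)\<^sup>2 \<partial>M) \<le> ?c\<^sup>2" by (simp add: prob_space)
    qed
    then show thesis using that by blast
  qed
  have "AE x in M. S_atom M F (\<lambda>x. G x / c) x \<le> ennreal (3 * cc k / c)" if c: "c > 0" for c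
  proof -
    have all: "AE x in M. \<forall>n. condE M F n (\<lambda>x. G x / c) x = Dk lam f k n x / c"
    proof (subst AE_all_countable, intro allI)
      fix n show "AE x in M. condE M F n (\<lambda>x. G x / c) x = Dk lam f k n x / c"
        using condE_cdiv[OF P Fi G(1), where n=n and c=c] G(2)[of n] by eventually_elim simp
    qed
    show ?thesis using all bound
    proof eventually_elim
      case (elim x)
      have eq: "ennreal ((condE M F (Suc i) (\<lambda>x. G x / c) x - condE M F i (\<lambda>x. G x / c) x)\<^sup>2)
          = ennreal ((incr lam f k (Suc i) x)\<^sup>2 / c\<^sup>2)" for i
        using elim by (simp add: Dk_Suc diff_divide_distrib[symmetric] power_divide)
      have "(\<Sum>i. ennreal ((condE M F (Suc i) (\<lambda>x. G x / c) x - condE M F i (\<lambda>x. G x / c) x)\<^sup>2))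
          \<le> ennreal (?c\<^sup>2 / c\<^sup>2)"
        unfolding eq
      proof (rule suminf_le_const)
        show "summable (\<lambda>i. ennreal ((incr lam f k (Suc i) x)\<^sup>2 / c\<^sup>2))" by (rule summableI)
        fix n
        have "(\<Sum>i<n. ennreal ((incr lam f k (Suc i) x)\<^sup>2 / c\<^sup>2)) = ennreal (\<Sum>i<n. (incr lam f k (Suc i) x)\<^sup>2 / c\<^sup>2)"
          by (rule sum_ennreal) simp
        also have "(\<Sum>i<n. (incr lam f k (Suc i) x)\<^sup>2 / c\<^sup>2) = (\<Sum>i\<in>{1..n}. (incr lam f k i x)\<^sup>2) / c\<^sup>2"
          by (simp add: sum_lessThan_Suc_shift[of "\<lambda>i. (incr lam f k i x)\<^sup>2 / c\<^sup>2"] sum_divide_distrib)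
        also have "\<dots> \<le> ?c\<^sup>2 / c\<^sup>2" using elim c by (intro divide_right_mono) auto
        finally show "(\<Sum>i<n. ennreal ((incr lam f k (Suc i) x)\<^sup>2 / c\<^sup>2)) \<le> ennreal (?c\<^sup>2 / c\<^sup>2)"
          by (simp add: ennreal_leI)
      qed
      then have "S_atom M F (\<lambda>x. G x / c) x \<le> epow (ennreal (?c\<^sup>2 / c\<^sup>2)) (1/2)"
        unfolding S_atom_def by (rule epow_mono) simp
      also have "\<dots> = ennreal ((?c\<^sup>2 / c\<^sup>2) powr (1/2))" by (rule epow_ennreal) simp
      also have "(?c\<^sup>2 / c\<^sup>2) powr (1/2) = ?c / c"
        using c cc_pos[of "k+1"] by (simp add: powr_half_sqrt real_sqrt_divide)
      also have "?c / c \<le> 3 * cc k / c" using c cc_pos[of k] by (simp add: cc_Suc divide_right_mono)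
      finally show ?case by (simp add: ennreal_leI)
    qed
  qed
  then show ?thesis using G by blast
qed


lemma L2_set_sum_le:
  fixes v :: "'k \<Rightarrow> 'i \<Rightarrow> real"
  assumes "finite F"
  shows "L2_set (\<lambda>i. \<Sum>k\<in>F. v k i) I \<le> (\<Sum>k\<in>F. L2_set (v k) I)"
  using assms
proof (induction F rule: finite_induct)
  case empty then show ?case by (simp add: L2_set_0')
next
  case (insert j F)
  have "L2_set (\<lambda>i. \<Sum>k\<in>insert j F. v k i) I = L2_set (\<lambda>i. v j i + (\<Sum>k\<in>F. v k i)) I"
    using insert by simp
  also have "\<dots> \<le> L2_set (v j) I + L2_set (\<lambda>i. \<Sum>k\<in>F. v k i) I" by (rule L2_set_triangle_ineq)
  also have "\<dots> \<le> L2_set (v j) I + (\<Sum>k\<in>F. L2_set (v k) I)" using insert by simp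
  also have "\<dots> = (\<Sum>k\<in>insert j F. L2_set (v k) I)" using insert by simp
  finally show ?case .
qed

lemma minkowski_has_sum:
  fixes v :: "'k \<Rightarrow> 'i \<Rightarrow> real"
  assumes I: "finite I" and hs: "\<And>i. i \<in> I \<Longrightarrow> ((\<lambda>k. v k i) has_sum s i) A"
  shows "ennreal (L2_set s I) \<le> infsum (\<lambda>k. ennreal (L2_set (v k) I)) A"
proof -
  have t: "((\<lambda>F. L2_set (\<lambda>i. \<Sum>k\<in>F. v k i) I) \<longlongrightarrow> L2_set s I) (finite_subsets_at_top A)"
    unfolding L2_set_def
  proof (intro tendsto_real_sqrt tendsto_sum tendsto_power)
    fix i assume "i \<in> I"
    then show "((\<lambda>F. \<Sum>k\<in>F. v k i) \<longlongrightarrow> s i) (finite_subsets_at_top A)"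
      using hs[of i] unfolding has_sum_def by simp
  qed
  then have t': "((\<lambda>F. ennreal (L2_set (\<lambda>i. \<Sum>k\<in>F. v k i) I)) \<longlongrightarrow> ennreal (L2_set s I)) (finite_subsets_at_top A)"
    by (rule tendsto_ennrealI)
  show ?thesis
  proof (rule tendsto_upperbound[OF t'])
    show "\<forall>\<^sub>F F in finite_subsets_at_top A. ennreal (L2_set (\<lambda>i. \<Sum>k\<in>F. v k i) I) \<le> infsum (\<lambda>k. ennreal (L2_set (v k) I)) A"
    proof (rule eventually_finite_subsets_at_top_weakI)
      fix F assume F: "finite F" "F \<subseteq> A"
      have "ennreal (L2_set (\<lambda>i. \<Sum>k\<in>F. v k i) I) \<le> ennreal (\<Sum>k\<in>F. L2_set (v k) I)"
        by (rule ennreal_leI) (rule L2_set_sum_le[OF F(1)])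
      also have "\<dots> = (\<Sum>k\<in>F. ennreal (L2_set (v k) I))" by (rule sum_ennreal[symmetric]) simp
      also have "\<dots> \<le> infsum (\<lambda>k. ennreal (L2_set (v k) I)) A"
        unfolding ennreal_infsum_SUP by (rule SUP_upper) (use F in auto)
      finally show "ennreal (L2_set (\<lambda>i. \<Sum>k\<in>F. v k i) I) \<le> infsum (\<lambda>k. ennreal (L2_set (v k) I)) A" .
    qed
  qed simp
qed

lemma borel_measurable_infsum_ennreal[measurable (raw)]:
  fixes h :: "'k::countable \<Rightarrow> 'a \<Rightarrow> ennreal"
  assumes [measurable]: "\<And>k. h k \<in> borel_measurable N"
  shows "(\<lambda>x. infsum (\<lambda>k. h k x) UNIV) \<in> borel_measurable N"
proof -
  have c: "countable {F :: 'k set. finite F \<and> F \<subseteq> UNIV}"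
    using countable_Collect_finite by simp
  have "(\<lambda>x. SUP F\<in>{F. finite F \<and> F \<subseteq> UNIV}. sum (\<lambda>k. h k x) F) \<in> borel_measurable N"
    by (rule borel_measurable_SUP[OF c]) measurable
  then show ?thesis by (simp only: ennreal_infsum_SUP)
qed


lemma H_to_P_generic:
  fixes X :: "nat \<Rightarrow> 'a \<Rightarrow> ennreal" and \<mu> :: "int \<Rightarrow> real" and \<nu> :: "int \<Rightarrow> 'a \<Rightarrow> enat"
  assumes P: "prob_space M" and Fi: "is_filtration M F" and MO: "musielak_orlicz M \<phi>" and r: "0 < r" "r \<le> 1"
    and st: "\<And>k. is_stopping_time M F (\<nu> k)"
    and fin: "atomic_size M \<phi> r \<mu> \<nu> < \<top>"
    and key: "\<And>n. n \<ge> 1 \<Longrightarrow> AE x in M. X n x \<le> infsum (\<lambda>k. ennreal (\<mu> k) * indicator {x\<in>space M. \<nu> k x \<le> enat (n - 1)} x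
        * inverse (mo_norm M \<phi> (indicator (B_set M (\<nu> k))))) UNIV"
  shows "\<exists>lam\<in>Lambda M F. (\<forall>n\<ge>1. AE x in M. X n x \<le> ennreal (lam (n - 1) x)) \<and> mo_norm M \<phi> (lam_inf lam) \<le> atomic_size M \<phi> r \<mu> \<nu>"
proof -
  interpret prob_space M by fact
  define N' where "N' k = inverse (mo_norm M \<phi> (indicator (B_set M (\<nu> k))))" for k
  define C where "C k n = {x\<in>space M. \<nu> k x \<le> enat n}" for k n
  have CF: "C k n \<in> sets (F n)" for k n using st[of k] unfolding C_def is_stopping_time_def by auto
  have CM: "C k n \<in> sets M" for k n using filt_sets_M[OF Fi CF] .
  have B_un: "B_set M (\<nu> k) = (\<Union>n. C k n)" for k
  proof -
    have "\<nu> k x < \<infinity> \<longleftrightarrow> (\<exists>n. \<nu> k x \<le> enat n)" for x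
      by (cases "\<nu> k x") auto
    then show ?thesis unfolding B_set_def C_def by auto
  qed
  have BM[measurable]: "B_set M (\<nu> k) \<in> sets M" for k unfolding B_un using CM by auto
  define Sn where "Sn n x = infsum (\<lambda>k. ennreal (\<mu> k) * indicator (C k n) x * N' k) UNIV" for n x
  define Sinf where "Sinf x = infsum (\<lambda>k. ennreal (\<mu> k) * indicator (B_set M (\<nu> k)) x * N' k) UNIV" for x
  define g where "g x = epow (infsum (\<lambda>k. epow (ennreal (\<mu> k) * indicator (B_set M (\<nu> k)) x * N' k) r) UNIV) (1 / r)" for x
  have size: "atomic_size M \<phi> r \<mu> \<nu> = mo_norm M \<phi> g"
    unfolding atomic_size_def g_def N'_def by simp
  have SnF: "Sn n \<in> borel_measurable (F n)" for n
  proof -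
    have [measurable]: "C k n \<in> sets (F n)" for k by (rule CF)
    show ?thesis unfolding Sn_def by measurable
  qed
  have SinfM[measurable]: "Sinf \<in> borel_measurable M" unfolding Sinf_def by measurable
  have Sn_mono: "Sn m x \<le> Sn n x" if "m \<le> n" for m n x
    unfolding Sn_def
  proof (rule infsum_ennreal_mono)
    fix k
    have "indicator (C k m) x \<le> (indicator (C k n) x :: ennreal)"
      using that unfolding C_def by (auto simp: indicator_def intro: order_trans)
    then show "ennreal (\<mu> k) * indicator (C k m) x * N' k \<le> ennreal (\<mu> k) * indicator (C k n) x * N' k"
      by (intro mult_right_mono mult_left_mono) auto
  qed
  have Sn_Sinf: "Sn n x \<le> Sinf x" for n x
    unfolding Sn_def Sinf_def
  proof (rule infsum_ennreal_mono)
    fix k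
    have "indicator (C k n) x \<le> (indicator (B_set M (\<nu> k)) x :: ennreal)"
      unfolding B_un by (auto simp: indicator_def)
    then show "ennreal (\<mu> k) * indicator (C k n) x * N' k \<le> ennreal (\<mu> k) * indicator (B_set M (\<nu> k)) x * N' k"
      by (intro mult_right_mono mult_left_mono) auto
  qed
  have Sinf_g: "Sinf x \<le> g x" for x unfolding Sinf_def g_def by (rule lr_le[OF r])
  have Sinf_fin: "AE x in M. Sinf x \<noteq> \<top>"
  proof -
    have "mo_norm M \<phi> g < \<top>" using fin size by simp
    then obtain s where s: "s \<in> {ennreal l | l. l > 0 \<and> (\<integral>\<^sup>+ x. phi_ext \<phi> x (g x / ennreal l) \<partial>M) \<le> 1}"
      unfolding mo_norm_def by (auto simp: Inf_less_iff)
    then obtain l where l: "l > 0" "(\<integral>\<^sup>+ x. phi_ext \<phi> x (g x / ennreal l) \<partial>M) \<le> 1" by auto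
    have Z[measurable]: "{x\<in>space M. Sinf x = \<top>} \<in> sets M" by measurable
    have "\<top> * emeasure M {x\<in>space M. Sinf x = \<top>} = (\<integral>\<^sup>+ x. \<top> * indicator {x\<in>space M. Sinf x = \<top>} x \<partial>M)"
      by (rule nn_integral_cmult_indicator[symmetric]) (rule Z)
    also have "\<dots> \<le> (\<integral>\<^sup>+ x. phi_ext \<phi> x (g x / ennreal l) \<partial>M)"
    proof (rule nn_integral_mono)
      fix x assume x: "x \<in> space M"
      show "\<top> * indicator {x\<in>space M. Sinf x = \<top>} x \<le> phi_ext \<phi> x (g x / ennreal l)"
      proof (cases "Sinf x = \<top>")
        case True
        then have "g x = \<top>" using Sinf_g[of x] by (simp add: top_unique)
        then have "g x / ennreal l = \<top>" by (simp add: ennreal_top_divide)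
        then show ?thesis by (simp add: phi_ext_def)
      qed simp
    qed
    also have "\<dots> \<le> 1" by (rule l(2))
    finally have "emeasure M {x\<in>space M. Sinf x = \<top>} = 0"
      by (cases "emeasure M {x\<in>space M. Sinf x = \<top>} = 0") (auto simp: ennreal_top_mult top_unique)
    then show ?thesis by (subst AE_iff_measurable[OF Z]) auto
  qed
  define h where "h m x = (if Sn m x < \<top> then enn2real (Sn m x) else 0)" for m x
  define lamH where "lamH n x = Max ((\<lambda>m. h m x) ` {..n})" for n x
  have hF: "h m \<in> borel_measurable (F n)" if "m \<le> n" for m n
  proof -
    have [measurable]: "Sn m \<in> borel_measurable (F n)" by (rule filt_meas_mono[OF Fi that SnF])
    show ?thesis unfolding h_def by measurable
  qed
  have h_nn: "h m x \<ge> 0" for m x unfolding h_def by simp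
  have h_le: "ennreal (h m x) \<le> Sn m x" for m x
    unfolding h_def by (cases "Sn m x < \<top>") (auto simp: less_top)
  have lamH_ge: "h m x \<le> lamH n x" if "m \<le> n" for m n x
    unfolding lamH_def using that by (intro Max_ge) auto
  have lamH_in: "lamH n x \<in> (\<lambda>m. h m x) ` {..n}" for n x
    unfolding lamH_def by (intro Max_in) auto
  have lamH_le: "ennreal (lamH n x) \<le> Sn n x" for n x
  proof -
    obtain m where m: "m \<le> n" "lamH n x = h m x" using lamH_in[of n x] by auto
    then show ?thesis using h_le[of m x] Sn_mono[OF m(1), of x] by simp
  qed
  have lamH_eq: "ennreal (lamH n x) = Sn n x" if "Sinf x \<noteq> \<top>" for n x
  proof (rule antisym[OF lamH_le])
    have "Sn n x < \<top>" using Sn_Sinf[of n x] that by (simp add: le_less_trans less_top)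
    then have "Sn n x = ennreal (h n x)" unfolding h_def by (simp add: less_top)
    also have "\<dots> \<le> ennreal (lamH n x)" by (rule ennreal_leI, rule lamH_ge) simp
    finally show "Sn n x \<le> ennreal (lamH n x)" .
  qed
  have lamL: "lamH \<in> Lambda M F"
    unfolding Lambda_def
  proof (intro CollectI allI conjI ballI)
    fix n
    show "lamH n \<in> borel_measurable (F n)"
      unfolding lamH_def by (rule borel_measurable_Max) (auto intro: hF)
    fix x assume "x \<in> space M"
    show "0 \<le> lamH n x" using lamH_ge[of 0 n x] h_nn[of 0 x] by simp
    show "lamH n x \<le> lamH (Suc n) x"
      unfolding lamH_def by (rule Max_mono) auto
  qed
  have adm: "AE x in M. X n x \<le> ennreal (lamH (n - 1) x)" if "n \<ge> 1" for n
    using key[OF that] Sinf_fin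
  proof eventually_elim
    case (elim x)
    then show ?case using lamH_eq[of x "n - 1"] unfolding Sn_def C_def N'_def by simp
  qed
  have "mo_norm M \<phi> (lam_inf lamH) \<le> mo_norm M \<phi> g"
  proof (rule mo_norm_mono_AE[OF MO], rule AE_I2)
    fix x
    have "lam_inf lamH x \<le> Sinf x"
      unfolding lam_inf_def by (rule SUP_least) (use lamH_le Sn_Sinf order_trans in blast)
    then show "lam_inf lamH x \<le> g x" using Sinf_g[of x] by (rule order_trans)
  qed
  then show ?thesis using lamL adm size by auto
qed


lemma enat_not_le_pred:
  assumes "n \<ge> 1" "\<not> v \<le> enat (n - 1)"
  shows "enat n \<le> v"
proof -
  have "enat (n - 1) < v" using assms(2) by simp
  then have "eSuc (enat (n - 1)) \<le> v" by (rule ileI1)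
  then show ?thesis using assms(1) by (simp add: eSuc_enat)
qed

lemma decomp_props:
  assumes "atomic_decomp M F \<phi> T f \<mu> a \<nu>"
  shows "\<And>k. 0 \<le> \<mu> k" "\<And>k. is_stopping_time M F (\<nu> k)"
    "AE x in M. \<forall>k m. enat m \<le> \<nu> k x \<longrightarrow> condE M F m (a k) x = 0"
    "AE x in M. \<forall>k. x \<in> B_set M (\<nu> k) \<longrightarrow> T (a k) x \<le> inverse (mo_norm M \<phi> (indicator (B_set M (\<nu> k))))"
    "AE x in M. \<forall>n. ((\<lambda>k. \<mu> k * condE M F n (a k) x) has_sum f n x) UNIV"
proof -
  have at: "is_atom M F \<phi> T (a k) (\<nu> k)" for k using assms unfolding atomic_decomp_def by auto
  show "\<And>k. 0 \<le> \<mu> k" using assms unfolding atomic_decomp_def by auto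
  show "\<And>k. is_stopping_time M F (\<nu> k)" using at unfolding is_atom_def by auto
  show "AE x in M. \<forall>k m. enat m \<le> \<nu> k x \<longrightarrow> condE M F m (a k) x = 0"
    using at unfolding is_atom_def by (simp add: AE_all_countable)
  show "AE x in M. \<forall>k. x \<in> B_set M (\<nu> k) \<longrightarrow> T (a k) x \<le> inverse (mo_norm M \<phi> (indicator (B_set M (\<nu> k))))"
    using at unfolding is_atom_def by (simp add: AE_all_countable)
  show "AE x in M. \<forall>n. ((\<lambda>k. \<mu> k * condE M F n (a k) x) has_sum f n x) UNIV"
    using assms unfolding atomic_decomp_def by (simp add: AE_all_countable)
qed

lemma key_M:
  assumes dec: "atomic_decomp M F \<phi> (M_atom M F) f \<mu> a \<nu>" and n: "n \<ge> 1"
  shows "AE x in M. ennreal \<bar>f n x\<bar> \<le> infsum (\<lambda>k. ennreal (\<mu> k) * indicator {x\<in>space M. \<nu> k x \<le> enat (n - 1)} x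
        * inverse (mo_norm M \<phi> (indicator (B_set M (\<nu> k))))) UNIV"
  using decomp_props(3,4,5)[OF dec] AE_space
proof eventually_elim
  case (elim x)
  have hs: "((\<lambda>k. \<mu> k * condE M F n (a k) x) has_sum f n x) UNIV" using elim by blast
  have "ennreal (L2_set (\<lambda>_. f n x) {0::nat}) \<le> infsum (\<lambda>k. ennreal (L2_set (\<lambda>_. \<mu> k * condE M F n (a k) x) {0::nat})) UNIV"
    by (rule minkowski_has_sum) (use hs in auto)
  then have "ennreal \<bar>f n x\<bar> \<le> infsum (\<lambda>k. ennreal \<bar>\<mu> k * condE M F n (a k) x\<bar>) UNIV"
    by (simp add: L2_set_def)
  also have "\<dots> \<le> infsum (\<lambda>k. ennreal (\<mu> k) * indicator {x\<in>space M. \<nu> k x \<le> enat (n - 1)} x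
        * inverse (mo_norm M \<phi> (indicator (B_set M (\<nu> k))))) UNIV"
  proof (rule infsum_ennreal_mono)
    fix k
    show "ennreal \<bar>\<mu> k * condE M F n (a k) x\<bar> \<le> ennreal (\<mu> k) * indicator {x\<in>space M. \<nu> k x \<le> enat (n - 1)} x
        * inverse (mo_norm M \<phi> (indicator (B_set M (\<nu> k))))"
    proof (cases "\<nu> k x \<le> enat (n - 1)")
      case True
      then have "\<nu> k x < \<infinity>" by (cases "\<nu> k x") auto
      then have xB: "x \<in> B_set M (\<nu> k)" using elim unfolding B_set_def by blast
      have "ennreal \<bar>\<mu> k * condE M F n (a k) x\<bar> = ennreal (\<mu> k) * ennreal \<bar>condE M F n (a k) x\<bar>"
        using decomp_props(1)[OF dec, of k] by (simp add: abs_mult ennreal_mult)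
      also have "ennreal \<bar>condE M F n (a k) x\<bar> \<le> M_atom M F (a k) x"
        unfolding M_atom_def by (rule SUP_upper) simp
      also have "\<dots> \<le> inverse (mo_norm M \<phi> (indicator (B_set M (\<nu> k))))" using elim xB by blast
      finally show ?thesis using True elim by (simp add: mult_left_mono)
    next
      case False
      then have "enat n \<le> \<nu> k x" by (rule enat_not_le_pred[OF n])
      then have "condE M F n (a k) x = 0" using elim by blast
      then show ?thesis by simp
    qed
  qed
  finally show ?case .
qed

lemma key_S:
  assumes dec: "atomic_decomp M F \<phi> (S_atom M F) f \<mu> a \<nu>" and n: "n \<ge> 1"
  shows "AE x in M. ennreal (sqfun_n f n x) \<le> infsum (\<lambda>k. ennreal (\<mu> k) * indicator {x\<in>space M. \<nu> k x \<le> enat (n - 1)} x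
        * inverse (mo_norm M \<phi> (indicator (B_set M (\<nu> k))))) UNIV"
  using decomp_props(3,4,5)[OF dec] AE_space
proof eventually_elim
  case (elim x)
  define d where "d k i = condE M F i (a k) x - condE M F (i - 1) (a k) x" for k i
  have hs: "((\<lambda>k. \<mu> k * d k i) has_sum (f i x - f (i - 1) x)) UNIV" for i
  proof -
    have h1: "((\<lambda>k. \<mu> k * condE M F i (a k) x) has_sum f i x) UNIV" using elim by blast
    have h2: "((\<lambda>k. - (\<mu> k * condE M F (i - 1) (a k) x)) has_sum - f (i - 1) x) UNIV"
      using elim by (intro has_sum_uminusI) blast
    have "((\<lambda>k. \<mu> k * condE M F i (a k) x + - (\<mu> k * condE M F (i - 1) (a k) x)) has_sum (f i x + - f (i - 1) x)) UNIV"
      by (rule has_sum_add[OF h1 h2])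
    then show ?thesis unfolding d_def by (simp add: right_diff_distrib)
  qed
  have "ennreal (L2_set (\<lambda>i. f i x - f (i - 1) x) {1..n}) \<le> infsum (\<lambda>k. ennreal (L2_set (\<lambda>i. \<mu> k * d k i) {1..n})) UNIV"
    by (rule minkowski_has_sum) (use hs in auto)
  then have "ennreal (sqfun_n f n x) \<le> infsum (\<lambda>k. ennreal (L2_set (\<lambda>i. \<mu> k * d k i) {1..n})) UNIV"
    by (simp add: L2_set_def sqfun_n_def)
  also have "\<dots> \<le> infsum (\<lambda>k. ennreal (\<mu> k) * indicator {x\<in>space M. \<nu> k x \<le> enat (n - 1)} x
        * inverse (mo_norm M \<phi> (indicator (B_set M (\<nu> k))))) UNIV"
  proof (rule infsum_ennreal_mono)
    fix k
    have L: "L2_set (\<lambda>i. \<mu> k * d k i) {1..n} = \<mu> k * L2_set (d k) {1..n}"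
      using decomp_props(1)[OF dec, of k] by (simp add: L2_set_right_distrib)
    show "ennreal (L2_set (\<lambda>i. \<mu> k * d k i) {1..n}) \<le> ennreal (\<mu> k) * indicator {x\<in>space M. \<nu> k x \<le> enat (n - 1)} x
        * inverse (mo_norm M \<phi> (indicator (B_set M (\<nu> k))))"
    proof (cases "\<nu> k x \<le> enat (n - 1)")
      case True
      then have "\<nu> k x < \<infinity>" by (cases "\<nu> k x") auto
      then have xB: "x \<in> B_set M (\<nu> k)" using elim unfolding B_set_def by blast
      have "ennreal (L2_set (d k) {1..n}) = epow (ennreal (\<Sum>i\<in>{1..n}. (d k i)\<^sup>2)) (1/2)"
        by (simp add: L2_set_def epow_ennreal sum_nonneg powr_half_sqrt)
      also have "(\<Sum>i\<in>{1..n}. (d k i)\<^sup>2) = (\<Sum>j<n. (condE M F (Suc j) (a k) x - condE M F j (a k) x)\<^sup>2)"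
        unfolding d_def using sum_lessThan_Suc_shift[of "\<lambda>i. (condE M F i (a k) x - condE M F (i - 1) (a k) x)\<^sup>2" n]
        by simp
      also have "ennreal \<dots> = (\<Sum>j<n. ennreal ((condE M F (Suc j) (a k) x - condE M F j (a k) x)\<^sup>2))"
        by (rule sum_ennreal[symmetric]) simp
      also have "epow \<dots> (1/2) \<le> S_atom M F (a k) x"
        unfolding S_atom_def by (intro epow_mono sum_le_suminf summableI) auto
      also have "\<dots> \<le> inverse (mo_norm M \<phi> (indicator (B_set M (\<nu> k))))" using elim xB by blast
      finally have "ennreal (L2_set (d k) {1..n}) \<le> inverse (mo_norm M \<phi> (indicator (B_set M (\<nu> k))))" .
      then have "ennreal (\<mu> k) * ennreal (L2_set (d k) {1..n}) \<le> ennreal (\<mu> k) * inverse (mo_norm M \<phi> (indicator (B_set M (\<nu> k))))"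
        by (rule mult_left_mono) simp
      then show ?thesis unfolding L using True elim decomp_props(1)[OF dec, of k] by (simp add: ennreal_mult)
    next
      case False
      then have ge: "enat n \<le> \<nu> k x" by (rule enat_not_le_pred[OF n])
      have "d k i = 0" if "i \<in> {1..n}" for i
      proof -
        have "enat i \<le> enat n" "enat (i - 1) \<le> enat n" using that by auto
        then have "enat i \<le> \<nu> k x" "enat (i - 1) \<le> \<nu> k x" using ge by (blast intro: order_trans)+
        then show ?thesis unfolding d_def using elim by auto
      qed
      then have "L2_set (d k) {1..n} = 0" by (simp add: L2_set_0')
      then show ?thesis unfolding L by simp
    qed
  qed
  finally show ?case .
qed

lemma P_le_Hat:
  assumes P: "prob_space M" and Fi: "is_filtration M F" and MO: "musielak_orlicz M \<phi>" and r: "0 < r" "r \<le> 1"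
  shows "P_norm M F \<phi> f \<le> Hat_norm M F \<phi> (M_atom M F) r f"
  unfolding Hat_norm_def
proof (rule Inf_greatest, safe)
  fix \<mu> a \<nu> assume dec: "atomic_decomp M F \<phi> (M_atom M F) f \<mu> a \<nu>"
  show "P_norm M F \<phi> f \<le> atomic_size M \<phi> r \<mu> \<nu>"
  proof (cases "atomic_size M \<phi> r \<mu> \<nu> < \<top>")
    case False then show ?thesis by (simp add: top_unique not_less)
  next
    case True
    obtain lam where lam: "lam \<in> Lambda M F" "\<forall>n\<ge>1. AE x in M. ennreal \<bar>f n x\<bar> \<le> ennreal (lam (n - 1) x)"
      "mo_norm M \<phi> (lam_inf lam) \<le> atomic_size M \<phi> r \<mu> \<nu>"
      using H_to_P_generic[OF P Fi MO r decomp_props(2)[OF dec] True key_M[OF dec]] by blast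
    have adm: "\<forall>n\<ge>1. AE x in M. \<bar>f n x\<bar> \<le> lam (n - 1) x"
    proof (intro allI impI)
      fix n :: nat assume "n \<ge> 1"
      show "AE x in M. \<bar>f n x\<bar> \<le> lam (n - 1) x"
        using lam(2)[rule_format, OF \<open>n \<ge> 1\<close>] AE_space
        by eventually_elim (simp add: ennreal_le_iff Lambda_nonneg[OF lam(1)])
    qed
    have "P_norm M F \<phi> f \<le> mo_norm M \<phi> (lam_inf lam)"
      unfolding P_norm_def by (rule Inf_lower) (use lam(1) adm in blast)
    then show ?thesis using lam(3) by (rule order_trans)
  qed
qed

lemma Q_le_Hat:
  assumes P: "prob_space M" and Fi: "is_filtration M F" and MO: "musielak_orlicz M \<phi>" and r: "0 < r" "r \<le> 1"
  shows "Q_norm M F \<phi> f \<le> Hat_norm M F \<phi> (S_atom M F) r f"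
  unfolding Hat_norm_def
proof (rule Inf_greatest, safe)
  fix \<mu> a \<nu> assume dec: "atomic_decomp M F \<phi> (S_atom M F) f \<mu> a \<nu>"
  show "Q_norm M F \<phi> f \<le> atomic_size M \<phi> r \<mu> \<nu>"
  proof (cases "atomic_size M \<phi> r \<mu> \<nu> < \<top>")
    case False then show ?thesis by (simp add: top_unique not_less)
  next
    case True
    obtain lam where lam: "lam \<in> Lambda M F" "\<forall>n\<ge>1. AE x in M. ennreal (sqfun_n f n x) \<le> ennreal (lam (n - 1) x)"
      "mo_norm M \<phi> (lam_inf lam) \<le> atomic_size M \<phi> r \<mu> \<nu>"
      using H_to_P_generic[OF P Fi MO r decomp_props(2)[OF dec] True key_S[OF dec]] by blast
    have adm: "\<forall>n\<ge>1. AE x in M. sqfun_n f n x \<le> lam (n - 1) x"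
    proof (intro allI impI)
      fix n :: nat assume "n \<ge> 1"
      show "AE x in M. sqfun_n f n x \<le> lam (n - 1) x"
        using lam(2)[rule_format, OF \<open>n \<ge> 1\<close>] AE_space
        by eventually_elim (simp add: ennreal_le_iff Lambda_nonneg[OF lam(1)])
    qed
    have "Q_norm M F \<phi> f \<le> mo_norm M \<phi> (lam_inf lam)"
      unfolding Q_norm_def by (rule Inf_lower) (use lam(1) adm in blast)
    then show ?thesis using lam(3) by (rule order_trans)
  qed
qed


lemma Cr_pos: assumes "0 < r" shows "3 * (1 / (1 - 2 powr (- r))) powr (1 / r) > (0::real)"
proof -
  have "1 < (2::real) powr r" using assms by simp
  then have "(2::real) powr (- r) < 1" by (simp add: powr_minus inverse_less_1_iff)
  then have "1 / (1 - 2 powr (- r)) > (0::real)" by (intro divide_pos_pos) auto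
  then have "(1 / (1 - 2 powr (- r))) powr (1 / r) > (0::real)" by (simp only: powr_gt_zero)
  then show ?thesis by simp
qed

lemma zero_M:
  assumes f: "f \<in> martingales M F" and lam: "lam \<in> Lambda M F"
    and adm: "\<forall>n\<ge>1. AE x in M. \<bar>f n x\<bar> \<le> lam (n - 1) x"
  shows "AE x in M. \<forall>i\<ge>1. lam (i - 1) x = 0 \<longrightarrow> f i x = f (i - 1) x"
proof -
  have adm': "AE x in M. \<forall>n. n \<ge> 1 \<longrightarrow> \<bar>f n x\<bar> \<le> lam (n - 1) x"
    using adm by (subst AE_all_countable) auto
  show ?thesis using adm' mart_props(1)[OF f] AE_space
  proof eventually_elim
    case (elim x)
    show ?case
    proof (intro allI impI)
      fix i :: nat assume i: "i \<ge> 1" "lam (i - 1) x = 0"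
      have "\<bar>f i x\<bar> \<le> 0" using elim i by auto
      moreover have "f (i - 1) x = 0"
      proof (cases "i - 1 = 0")
        case True then show ?thesis using elim by simp
      next
        case False
        then have "i - 1 \<ge> 1" by simp
        then have "\<bar>f (i - 1) x\<bar> \<le> lam (i - 1 - 1) x" using elim by blast
        also have "\<dots> \<le> lam (i - 1) x" by (rule Lambda_mono[OF lam]) (use elim in auto)
        finally show ?thesis using i by simp
      qed
      ultimately show "f i x = f (i - 1) x" by simp
    qed
  qed
qed

lemma zero_S:
  assumes lam: "lam \<in> Lambda M F"
    and adm: "\<forall>n\<ge>1. AE x in M. sqfun_n f n x \<le> lam (n - 1) x"
  shows "AE x in M. \<forall>i\<ge>1. lam (i - 1) x = 0 \<longrightarrow> f i x = f (i - 1) x"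
proof -
  have adm': "AE x in M. \<forall>n. n \<ge> 1 \<longrightarrow> sqfun_n f n x \<le> lam (n - 1) x"
    using adm by (subst AE_all_countable) auto
  show ?thesis using adm'
  proof eventually_elim
    case (elim x)
    show ?case
    proof (intro allI impI)
      fix i :: nat assume i: "i \<ge> 1" "lam (i - 1) x = 0"
      have s0: "sqfun_n f i x \<le> 0" using elim i by auto
      have nn: "0 \<le> (\<Sum>j\<in>{1..i}. (f j x - f (j - 1) x)\<^sup>2)" by (intro sum_nonneg) simp
      have "(\<Sum>j\<in>{1..i}. (f j x - f (j - 1) x)\<^sup>2) = 0"
        using s0 nn unfolding sqfun_n_def by simp
      moreover have "(f i x - f (i - 1) x)\<^sup>2 \<le> (\<Sum>j\<in>{1..i}. (f j x - f (j - 1) x)\<^sup>2)"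
        using i by (intro member_le_sum) auto
      ultimately show "f i x = f (i - 1) x" by simp
    qed
  qed
qed

lemma Hat_le_P:
  assumes P: "prob_space M" and Fi: "is_filtration M F" and MO: "musielak_orlicz M \<phi>"
    and f: "f \<in> martingales M F" and r: "0 < r" "r \<le> 1"
  shows "Hat_norm M F \<phi> (M_atom M F) r f \<le> ennreal (3 * (1 / (1 - 2 powr (- r))) powr (1 / r)) * P_norm M F \<phi> f"
proof -
  define C where "C = 3 * (1 / (1 - 2 powr (- r))) powr (1 / r)"
  have C: "C > 0" unfolding C_def by (rule Cr_pos[OF r(1)])
  have "Hat_norm M F \<phi> (M_atom M F) r f \<le> Inf ((\<lambda>y. ennreal C * y) ` {mo_norm M \<phi> (lam_inf lam) | lam. lam \<in> Lambda M F \<and>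
       (\<forall>n\<ge>1. AE x in M. \<bar>f n x\<bar> \<le> lam (n - 1) x)})"
  proof (rule Inf_greatest, safe)
    fix lam assume lam: "lam \<in> Lambda M F" "\<forall>n\<ge>1. AE x in M. \<bar>f n x\<bar> \<le> lam (n - 1) x"
    show "Hat_norm M F \<phi> (M_atom M F) r f \<le> ennreal C * mo_norm M \<phi> (lam_inf lam)"
    proof (cases "mo_norm M \<phi> (lam_inf lam) < \<top>")
      case False
      then show ?thesis using C by (simp add: not_less top_unique ennreal_mult_top)
    next
      case True
      show ?thesis unfolding C_def
      proof (rule P_to_H[OF P Fi MO f lam(1) r True zero_M[OF f lam(1) lam(2)]])
        fix k show "\<exists>G. integrable M G \<and> (\<forall>n. AE x in M. condE M F n G x = Dk lam f k n x) \<and>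
              (\<forall>c>0. AE x in M. M_atom M F (\<lambda>x. G x / c) x \<le> ennreal (3 * cc k / c))"
          by (rule gen_M[OF P Fi f lam(1)]) (use lam(2) in blast)
      qed
    qed
  qed
  also have "\<dots> = ennreal C * P_norm M F \<phi> f"
    unfolding P_norm_def by (rule ennreal_mult_Inf_image[OF C])
  finally show ?thesis unfolding C_def .
qed

lemma Hat_le_Q:
  assumes P: "prob_space M" and Fi: "is_filtration M F" and MO: "musielak_orlicz M \<phi>"
    and f: "f \<in> martingales M F" and r: "0 < r" "r \<le> 1"
  shows "Hat_norm M F \<phi> (S_atom M F) r f \<le> ennreal (3 * (1 / (1 - 2 powr (- r))) powr (1 / r)) * Q_norm M F \<phi> f"
proof -
  define C where "C = 3 * (1 / (1 - 2 powr (- r))) powr (1 / r)"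
  have C: "C > 0" unfolding C_def by (rule Cr_pos[OF r(1)])
  have "Hat_norm M F \<phi> (S_atom M F) r f \<le> Inf ((\<lambda>y. ennreal C * y) ` {mo_norm M \<phi> (lam_inf lam) | lam. lam \<in> Lambda M F \<and>
       (\<forall>n\<ge>1. AE x in M. sqfun_n f n x \<le> lam (n - 1) x)})"
  proof (rule Inf_greatest, safe)
    fix lam assume lam: "lam \<in> Lambda M F" "\<forall>n\<ge>1. AE x in M. sqfun_n f n x \<le> lam (n - 1) x"
    show "Hat_norm M F \<phi> (S_atom M F) r f \<le> ennreal C * mo_norm M \<phi> (lam_inf lam)"
    proof (cases "mo_norm M \<phi> (lam_inf lam) < \<top>")
      case False
      then show ?thesis using C by (simp add: not_less top_unique ennreal_mult_top)
    next
      case True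
      show ?thesis unfolding C_def
      proof (rule P_to_H[OF P Fi MO f lam(1) r True zero_S[OF lam(1) lam(2)]])
        fix k show "\<exists>G. integrable M G \<and> (\<forall>n. AE x in M. condE M F n G x = Dk lam f k n x) \<and>
              (\<forall>c>0. AE x in M. S_atom M F (\<lambda>x. G x / c) x \<le> ennreal (3 * cc k / c))"
          by (rule gen_S[OF P Fi f lam(1)]) (use lam(2) in blast)
      qed
    qed
  qed
  also have "\<dots> = ennreal C * Q_norm M F \<phi> f"
    unfolding Q_norm_def by (rule ennreal_mult_Inf_image[OF C])
  finally show ?thesis unfolding C_def .
qed

theorem theorem4p4:
  fixes M :: "'a measure" and F :: "nat \<Rightarrow> 'a measure" and \<phi> :: "'a \<Rightarrow> real \<Rightarrow> real"
  assumes "prob_space M"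
    and "is_filtration M F"
    and "musielak_orlicz M \<phi>"
  shows "\<forall>r\<in>{0<..1}.
     (P_space M F \<phi> = Hat_space M F \<phi> (M_atom M F) r \<and>
      (\<exists>C::real. C > 0 \<and> (\<forall>f\<in>martingales M F.
          Hat_norm M F \<phi> (M_atom M F) r f \<le> ennreal C * P_norm M F \<phi> f \<and>
          P_norm M F \<phi> f \<le> ennreal C * Hat_norm M F \<phi> (M_atom M F) r f)))
   \<and> (Q_space M F \<phi> = Hat_space M F \<phi> (S_atom M F) r \<and>
      (\<exists>C::real. C > 0 \<and> (\<forall>f\<in>martingales M F.
          Hat_norm M F \<phi> (S_atom M F) r f \<le> ennreal C * Q_norm M F \<phi> f \<and>
          Q_norm M F \<phi> f \<le> ennreal C * Hat_norm M F \<phi> (S_atom M F) r f)))"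
proof
  fix r :: real assume "r \<in> {0<..1}"
  then have r: "0 < r" "r \<le> 1" by auto
  define C0 where "C0 = 3 * (1 / (1 - 2 powr (- r))) powr (1 / r)"
  have C0: "C0 > 0" unfolding C0_def by (rule Cr_pos[OF r(1)])
  define C where "C = C0 + 1"
  have C: "C > 0" "C0 \<le> C" "1 \<le> C" unfolding C_def using C0 by auto
  have up: "ennreal C0 * y \<le> ennreal C * y" for y by (rule mult_right_mono) (use C in \<open>auto intro: ennreal_leI\<close>)
  have up1: "y \<le> ennreal C * y" for y :: ennreal
  proof -
    have "(1::ennreal) \<le> ennreal C" using C(3) by (metis ennreal_1 ennreal_leI)
    then have "1 * y \<le> ennreal C * y" by (rule mult_right_mono) simp
    then show ?thesis by simp
  qed
  have M1: "Hat_norm M F \<phi> (M_atom M F) r f \<le> ennreal C * P_norm M F \<phi> f" if f: "f \<in> martingales M F" for f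
    using Hat_le_P[OF assms f r] up[of "P_norm M F \<phi> f"] unfolding C0_def by (rule order_trans)
  have M2: "P_norm M F \<phi> f \<le> ennreal C * Hat_norm M F \<phi> (M_atom M F) r f" for f
    using P_le_Hat[OF assms r] up1 by (rule order_trans)
  have S1: "Hat_norm M F \<phi> (S_atom M F) r f \<le> ennreal C * Q_norm M F \<phi> f" if f: "f \<in> martingales M F" for f
    using Hat_le_Q[OF assms f r] up[of "Q_norm M F \<phi> f"] unfolding C0_def by (rule order_trans)
  have S2: "Q_norm M F \<phi> f \<le> ennreal C * Hat_norm M F \<phi> (S_atom M F) r f" for f
    using Q_le_Hat[OF assms r] up1 by (rule order_trans)
  have fin: "a < \<top>" if "a \<le> ennreal C * b" "b < \<top>" for a b
  proof -
    have "ennreal C * b < \<top>" using that(2) by (simp add: ennreal_mult_less_top)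
    with that(1) show ?thesis by (rule le_less_trans)
  qed
  have eqP: "P_space M F \<phi> = Hat_space M F \<phi> (M_atom M F) r"
  proof (intro set_eqI iffI)
    fix f assume "f \<in> P_space M F \<phi>"
    then have f: "f \<in> martingales M F" "P_norm M F \<phi> f < \<top>" unfolding P_space_def by auto
    then have "Hat_norm M F \<phi> (M_atom M F) r f < \<top>" using fin[OF M1[OF f(1)] f(2)] by simp
    then show "f \<in> Hat_space M F \<phi> (M_atom M F) r" using f(1) unfolding Hat_space_def by simp
  next
    fix f assume "f \<in> Hat_space M F \<phi> (M_atom M F) r"
    then have f: "f \<in> martingales M F" "Hat_norm M F \<phi> (M_atom M F) r f < \<top>" unfolding Hat_space_def by auto
    then have "P_norm M F \<phi> f < \<top>" using fin[OF M2 f(2)] by simp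
    then show "f \<in> P_space M F \<phi>" using f(1) unfolding P_space_def by simp
  qed
  have eqQ: "Q_space M F \<phi> = Hat_space M F \<phi> (S_atom M F) r"
  proof (intro set_eqI iffI)
    fix f assume "f \<in> Q_space M F \<phi>"
    then have f: "f \<in> martingales M F" "Q_norm M F \<phi> f < \<top>" unfolding Q_space_def by auto
    then have "Hat_norm M F \<phi> (S_atom M F) r f < \<top>" using fin[OF S1[OF f(1)] f(2)] by simp
    then show "f \<in> Hat_space M F \<phi> (S_atom M F) r" using f(1) unfolding Hat_space_def by simp
  next
    fix f assume "f \<in> Hat_space M F \<phi> (S_atom M F) r"
    then have f: "f \<in> martingales M F" "Hat_norm M F \<phi> (S_atom M F) r f < \<top>" unfolding Hat_space_def by auto
    then have "Q_norm M F \<phi> f < \<top>" using fin[OF S2 f(2)] by simp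
    then show "f \<in> Q_space M F \<phi>" using f(1) unfolding Q_space_def by simp
  qed
  have exM: "\<exists>C::real. C > 0 \<and> (\<forall>f\<in>martingales M F.
          Hat_norm M F \<phi> (M_atom M F) r f \<le> ennreal C * P_norm M F \<phi> f \<and>
          P_norm M F \<phi> f \<le> ennreal C * Hat_norm M F \<phi> (M_atom M F) r f)"
    using M1 M2 C(1) by blast
  have exS: "\<exists>C::real. C > 0 \<and> (\<forall>f\<in>martingales M F.
          Hat_norm M F \<phi> (S_atom M F) r f \<le> ennreal C * Q_norm M F \<phi> f \<and>
          Q_norm M F \<phi> f \<le> ennreal C * Hat_norm M F \<phi> (S_atom M F) r f)"
    using S1 S2 C(1) by blast
  show "(P_space M F \<phi> = Hat_space M F \<phi> (M_atom M F) r \<and>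
      (\<exists>C::real. C > 0 \<and> (\<forall>f\<in>martingales M F.
          Hat_norm M F \<phi> (M_atom M F) r f \<le> ennreal C * P_norm M F \<phi> f \<and>
          P_norm M F \<phi> f \<le> ennreal C * Hat_norm M F \<phi> (M_atom M F) r f)))
   \<and> (Q_space M F \<phi> = Hat_space M F \<phi> (S_atom M F) r \<and>
      (\<exists>C::real. C > 0 \<and> (\<forall>f\<in>martingales M F.
          Hat_norm M F \<phi> (S_atom M F) r f \<le> ennreal C * Q_norm M F \<phi> f \<and>
          Q_norm M F \<phi> f \<le> ennreal C * Hat_norm M F \<phi> (S_atom M F) r f)))"
    using eqP eqQ exM exS by (intro conjI)
qed


end
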